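(* Let $\lambda_1\ge\lambda_2\ge2$ and $h_1\ge h_2\ge 2$ be integers and let $\lambda=(\lambda_1,\lambda_2,2^{h_2-2},1^{h_1-h_2})$, a partition of $n=\lambda_1+\lambda_2+h_1+h_2-4$. If $m=h_1$ or $m=n-(\lambda_1-1)$, then $$|\mathrm{QYT}_{=m}(\lambda)|=\frac{\lambda_1-\lambda_2+1}{m-h_2+1}\binom{\lambda_1+h_1-2}{m-h_2}\binom{\lambda_2+h_1-3}{m-h_2}\binom{m-h_2}{m-h_1}\binom{\lambda_2+h_2-4}{h_2-2}\binom{\lambda_1+h_2-3}{h_2-2}\frac{1}{\binom{h_1-1}{h_2-2}}.$$
   Context: The notation $(\lambda_1,\lambda_2,2^{h_2-2},1^{h_1-h_2})$ denotes the partition with rows of lengths $\lambda_1,\lambda_2$, followed by $h_2-2$ rows of length $2$, followed by $h_1-h_2$ rows of length $1$; its first column has height $h_1$ and its second column height $h_2$. The (French) Young diagram has $\lambda_j$ left-justified boxes in row $j$, rows numbered from bottom to top. A semistandard Young tableau (SSYT) of shape $\lambda$ is a filling of the boxes with positive integers weakly increasing left to right along rows and strictly increasing bottom to top along columns. An SSYT $T$ is quasi-Yamanouchi if for every integer $i>1$ appearing in $T$, the leftmost occurrence of $i$ lies in a column weakly left of (column index $\le$) some occurrence of $i-1$. $\mathrm{QYT}_{=m}(\lambda)$ is the set of quasi-Yamanouchi tableaux of shape $\lambda$ whose largest entry is exactly $m$. *)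

theory Defs
  imports Complex_Main
begin

text \<open>A partition is a list of row lengths (row 0 is the bottom row, French convention).
  Boxes are pairs (row, column), both 0-indexed.\<close>

definition boxes :: "nat list \<Rightarrow> (nat \<times> nat) set" where
  "boxes lam = {(j, c). j < length lam \<and> c < lam ! j}"

definition is_SSYT :: "nat list \<Rightarrow> (nat \<times> nat \<Rightarrow> nat) \<Rightarrow> bool" where
  "is_SSYT lam T \<longleftrightarrow>
     (\<forall>b. b \<notin> boxes lam \<longrightarrow> T b = 0) \<and>
     (\<forall>b\<in>boxes lam. 1 \<le> T b) \<and>
     (\<forall>j c. (j, c) \<in> boxes lam \<and> (j, Suc c) \<in> boxes lam \<longrightarrow> T (j, c) \<le> T (j, Suc c)) \<and>
     (\<forall>j c. (j, c) \<in> boxes lam \<and> (Suc j, c) \<in> boxes lam \<longrightarrow> T (j, c) < T (Suc j, c))"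

definition leftmost_col :: "nat list \<Rightarrow> (nat \<times> nat \<Rightarrow> nat) \<Rightarrow> nat \<Rightarrow> nat" where
  "leftmost_col lam T i = Min {c. \<exists>j. (j, c) \<in> boxes lam \<and> T (j, c) = i}"

definition quasi_yamanouchi :: "nat list \<Rightarrow> (nat \<times> nat \<Rightarrow> nat) \<Rightarrow> bool" where
  "quasi_yamanouchi lam T \<longleftrightarrow>
     (\<forall>i. 1 < i \<and> i \<in> T ` boxes lam \<longrightarrow>
        (\<exists>j c. (j, c) \<in> boxes lam \<and> T (j, c) = i - 1 \<and> leftmost_col lam T i \<le> c))"

definition QYT_eq :: "nat \<Rightarrow> nat list \<Rightarrow> (nat \<times> nat \<Rightarrow> nat) set" where
  "QYT_eq m lam = {T. is_SSYT lam T \<and> quasi_yamanouchi lam T \<and> Max (T ` boxes lam) = m}"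

definition hook_shape :: "nat \<Rightarrow> nat \<Rightarrow> nat \<Rightarrow> nat \<Rightarrow> nat list" where
  "hook_shape l1 l2 h1 h2 = [l1, l2] @ replicate (h2 - 2) 2 @ replicate (h1 - h2) 1"

end

theory Submission
  imports Defs "HOL-Library.Multiset"
begin

definition Wk :: "nat \<Rightarrow> nat \<Rightarrow> nat list set" where
  "Wk s N = {xs. length xs = s \<and> sorted xs \<and> set xs \<subseteq> {1..N}}"

definition SkA :: "nat \<Rightarrow> nat set \<Rightarrow> nat list set" where
  "SkA k A = {xs. length xs = k \<and> sorted_wrt (<) xs \<and> set xs \<subseteq> A}"

definition WkA :: "nat \<Rightarrow> nat set \<Rightarrow> nat list set" where
  "WkA s A = {xs. length xs = s \<and> sorted xs \<and> set xs \<subseteq> A}"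

lemma card_WkA:
  assumes "finite A"
  shows "card (WkA s A) = (card A + s - 1) choose s"
proof -
  have "bij_betw mset (WkA s A) (multisets_of_size A s)"
  proof (rule bij_betw_byWitness[where f' = sorted_list_of_multiset])
    show "\<forall>a\<in>WkA s A. sorted_list_of_multiset (mset a) = a"
      by (auto simp: WkA_def sorted_sort_id)
    show "\<forall>a'\<in>multisets_of_size A s. mset (sorted_list_of_multiset a') = a'" by simp
    show "mset ` WkA s A \<subseteq> multisets_of_size A s"
      by (auto simp: WkA_def multisets_of_size_def)
    show "sorted_list_of_multiset ` multisets_of_size A s \<subseteq> WkA s A"
    proof
      fix xs assume "xs \<in> sorted_list_of_multiset ` multisets_of_size A s"
      then obtain M where M: "M \<in> multisets_of_size A s" "xs = sorted_list_of_multiset M" by auto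
      have "mset xs = M" using M by simp
      then have "set xs = set_mset M" "length xs = size M" by (metis set_mset_mset, metis size_mset)
      then show "xs \<in> WkA s A" using M by (auto simp: WkA_def multisets_of_size_def)
    qed
  qed
  then show ?thesis using card_multisets_of_size[OF assms] bij_betw_same_card by metis
qed

lemma card_Wk: "card (Wk s N) = (N + s - 1) choose s"
proof -
  have "Wk s N = WkA s {1..N}" by (simp add: Wk_def WkA_def)
  then show ?thesis using card_WkA[of "{1..N}" s] by simp
qed

lemma card_SkA:
  assumes "finite A"
  shows "card (SkA k A) = card A choose k"
proof -
  have "bij_betw set (SkA k A) {B. B \<subseteq> A \<and> card B = k}"
  proof (rule bij_betw_byWitness[where f' = sorted_list_of_set])
    show "\<forall>a\<in>SkA k A. sorted_list_of_set (set a) = a"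
      by (auto simp: SkA_def sorted_list_of_set.idem_if_sorted_distinct strict_sorted_iff)
    show "\<forall>a'\<in>{B. B \<subseteq> A \<and> card B = k}. set (sorted_list_of_set a') = a'"
      using assms by (metis (mono_tags, lifting) mem_Collect_eq rev_finite_subset set_sorted_list_of_set)
    show "set ` SkA k A \<subseteq> {B. B \<subseteq> A \<and> card B = k}"
      by (auto simp: SkA_def strict_sorted_iff distinct_card)
    show "sorted_list_of_set ` {B. B \<subseteq> A \<and> card B = k} \<subseteq> SkA k A"
    proof
      fix xs assume "xs \<in> sorted_list_of_set ` {B. B \<subseteq> A \<and> card B = k}"
      then obtain B where B: "B \<subseteq> A" "card B = k" "xs = sorted_list_of_set B" by auto
      have fB: "finite B" using B(1) assms rev_finite_subset by auto
      then show "xs \<in> SkA k A" using B by (auto simp: SkA_def)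
    qed
  qed
  then show ?thesis using n_subsets[OF assms] bij_betw_same_card by metis
qed


definition Hs :: "nat \<Rightarrow> nat \<Rightarrow> nat \<Rightarrow> (nat list \<times> nat list) set" where
  "Hs r k N = {(v,w). v \<in> Wk r N \<and> w \<in> SkA k {1..N} \<and> (\<forall>y\<in>set w. hd v < y)}"

lemma Hs_eq_image:
  "Hs (Suc r) k N = (\<lambda>(x,v,w). (x#v, w)) ` (SIGMA x:{1..N}. WkA r {x..N} \<times> SkA k {x<..N})"
proof (rule set_eqI, rule iffI)
  fix p assume "p \<in> Hs (Suc r) k N"
  then obtain v w where p: "p = (v,w)" "v \<in> Wk (Suc r) N" "w \<in> SkA k {1..N}" "\<forall>y\<in>set w. hd v < y"
    by (auto simp: Hs_def)
  then obtain x v' where v: "v = x # v'" by (cases v) (auto simp: Wk_def)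
  have "x \<in> {1..N}" "v' \<in> WkA r {x..N}" using p v by (auto simp: Wk_def WkA_def)
  moreover have "w \<in> SkA k {x<..N}" using p v by (auto simp: SkA_def)
  ultimately show "p \<in> (\<lambda>(x,v,w). (x#v, w)) ` (SIGMA x:{1..N}. WkA r {x..N} \<times> SkA k {x<..N})"
    using p v by force
next
  fix p assume "p \<in> (\<lambda>(x,v,w). (x#v, w)) ` (SIGMA x:{1..N}. WkA r {x..N} \<times> SkA k {x<..N})"
  then obtain x v w where p: "p = (x#v, w)" "x \<in> {1..N}" "v \<in> WkA r {x..N}" "w \<in> SkA k {x<..N}"
    by auto
  then show "p \<in> Hs (Suc r) k N"
    by (fastforce simp: Hs_def Wk_def WkA_def SkA_def)
qed

lemma term_ident:
  "((y + r) choose r) * (y choose k) = ((r + k) choose k) * ((y + r) choose (r + k))"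
proof (cases "k \<le> y")
  case True
  have "((y + r) choose y) * (y choose k) = ((y + r) choose k) * ((y + r - k) choose (y - k))"
    using choose_mult[of k y "y+r"] True by simp
  moreover have "((y + r) choose (r + k)) * ((r + k) choose k) = ((y + r) choose k) * ((y + r - k) choose (r + k - k))"
    using choose_mult[of k "r+k" "y+r"] True by simp
  moreover have "(y + r) choose y = (y + r) choose r" using binomial_symmetric[of y "y+r"] by simp
  moreover have "(y + r - k) choose (y - k) = (y + r - k) choose r"
    using binomial_symmetric[of "y-k" "y+r-k"] True by simp
  ultimately show ?thesis by (simp add: mult.commute)
next
  case False
  then show ?thesis by (simp add: binomial_eq_0)
qed

lemma sum_ident:
  "(\<Sum>y<N. ((y + r) choose r) * (y choose k)) = ((r + k) choose k) * ((N + r) choose (Suc (r + k)))"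
proof (induction N)
  case 0
  then show ?case by simp
next
  case (Suc N)
  then show ?case using term_ident[of N r k] by (simp add: algebra_simps)
qed

lemma card_Hs: "card (Hs (Suc r) k N) = ((r + k) choose k) * ((N + r) choose (Suc (r + k)))"
proof -
  have inj: "inj_on (\<lambda>(x,v,w). (x#v, w)) (SIGMA x:{1..N}. WkA r {x..N} \<times> SkA k {x<..N})"
    by (auto simp: inj_on_def)
  have fin: "\<And>x. finite (WkA r {x..N} \<times> SkA k {x<..N})"
  proof -
    fix x
    have "finite (WkA r {x..N})" using card_WkA[of "{x..N}" r] 
      by (metis (no_types, lifting) WkA_def finite_lists_length_eq finite_atLeastAtMost mem_Collect_eq rev_finite_subset subsetI)
    moreover have "finite (SkA k {x<..N})"
      by (metis (no_types, lifting) SkA_def finite_lists_length_eq finite_greaterThanAtMost mem_Collect_eq rev_finite_subset subsetI)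
    ultimately show "finite (WkA r {x..N} \<times> SkA k {x<..N})" by simp
  qed
  have "card (Hs (Suc r) k N) = card (SIGMA x:{1..N}. WkA r {x..N} \<times> SkA k {x<..N})"
    unfolding Hs_eq_image using card_image[OF inj] .
  also have "\<dots> = (\<Sum>x\<in>{1..N}. card (WkA r {x..N}) * card (SkA k {x<..N}))"
    using fin by (simp add: card_SigmaI card_cartesian_product)
  also have "\<dots> = (\<Sum>x\<in>{1..N}. ((N - x + r) choose r) * ((N - x) choose k))"
    by (rule sum.cong) (auto simp: card_WkA card_SkA Suc_diff_le)
  also have "\<dots> = (\<Sum>y<N. ((y + r) choose r) * (y choose k))"
  proof (rule sum.reindex_bij_witness[where i = "\<lambda>y. N - y" and j = "\<lambda>x. N - x"])
  qed auto
  also have "\<dots> = ((r + k) choose k) * ((N + r) choose (Suc (r + k)))" by (rule sum_ident)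
  finally show ?thesis .
qed


fun sw :: "nat list \<Rightarrow> nat list \<Rightarrow> nat list \<times> nat list" where
  "sw (x#xs) (y#ys) = (if y \<le> x then (ys, y#x#xs) else (case sw xs ys of (q,p) \<Rightarrow> (x#q, y#p)))"
| "sw [] (y#ys) = (ys, [y])"
| "sw xs [] = ([],[])"

definition good :: "nat list \<Rightarrow> nat list \<Rightarrow> bool" where
  "good u v \<longleftrightarrow> length v \<le> length u \<and> (\<forall>i<length v. u!i < v!i)"

lemma good_Nil[simp]: "good u []" by (simp add: good_def)
lemma good_Nil2[simp]: "good [] (y#ys) = False" by (simp add: good_def)
lemma good_Cons[simp]: "good (x#xs) (y#ys) \<longleftrightarrow> x < y \<and> good xs ys"
  by (auto simp: good_def nth_Cons' less_Suc_eq_0_disj)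

lemma not_good_ne: "\<not> good x y \<Longrightarrow> y \<noteq> []" by auto

lemma sw_len:
  "y \<noteq> [] \<Longrightarrow> \<not> good x y \<Longrightarrow>
   length (fst (sw x y)) = length y - 1 \<and> length (snd (sw x y)) = length x + 1"
  by (induction x y rule: sw.induct) (auto split: prod.splits dest: not_good_ne)

lemma sw_hd: "y \<noteq> [] \<Longrightarrow> hd (snd (sw x y)) = hd y"
  by (cases "(x,y)" rule: sw.cases) (auto split: prod.splits)

lemma sw_set:
  "set (fst (sw x y)) \<union> set (snd (sw x y)) \<subseteq> set x \<union> set y"
  by (induction x y rule: sw.induct) (auto split: prod.splits)

lemma sorted_Cons_hd: "sorted l \<Longrightarrow> (l \<noteq> [] \<Longrightarrow> a \<le> hd l) \<Longrightarrow> sorted (a#l)"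
  by (cases l) auto

lemma sw_sorted:
  "y \<noteq> [] \<Longrightarrow> \<not> good x y \<Longrightarrow> sorted x \<Longrightarrow> sorted y \<Longrightarrow>
   sorted (fst (sw x y)) \<and> sorted (snd (sw x y))"
proof (induction x y rule: sw.induct)
  case (1 x xs y ys)
  show ?case
  proof (cases "y \<le> x")
    case True
    then show ?thesis using "1.prems" by (auto intro: order_trans)
  next
    case False
    obtain q p where qp: "sw xs ys = (q,p)" by fastforce
    have ys: "ys \<noteq> []" using "1.prems" False by auto
    have ng: "\<not> good xs ys" using "1.prems" False by auto
    have IH: "sorted q \<and> sorted p" using "1.IH"[OF False ys ng] "1.prems" qp by simp
    have hp: "hd p = hd ys" using sw_hd[OF ys, of xs] qp by simp
    have sq: "set q \<subseteq> set xs \<union> set ys" using sw_set[of xs ys] qp by auto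
    have "sorted (x#q)"
    proof -
      have "\<forall>z\<in>set q. x \<le> z"
      proof
        fix z assume "z \<in> set q"
        then have "z \<in> set xs \<or> z \<in> set ys" using sq by auto
        then show "x \<le> z" using "1.prems" False by auto
      qed
      then show ?thesis using IH by simp
    qed
    moreover have "sorted (y#p)"
    proof (rule sorted_Cons_hd)
      show "sorted p" using IH by simp
      show "y \<le> hd p" if "p \<noteq> []" using hp ys "1.prems" by (cases ys) auto
    qed
    ultimately show ?thesis using False qp by simp
  qed
next
  case (2 y ys)
  then show ?case by simp
next
  case (3 xs)
  then show ?case by simp
qed

lemma sw_inv:
  "y \<noteq> [] \<Longrightarrow> \<not> good x y \<Longrightarrow> sorted y \<Longrightarrow> sw (fst (sw x y)) (snd (sw x y)) = (x, y)"
proof (induction x y rule: sw.induct)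
  case (1 x xs y ys)
  show ?case
  proof (cases "y \<le> x")
    case True
    then show ?thesis using "1.prems" by (cases ys) auto
  next
    case False
    obtain q p where qp: "sw xs ys = (q,p)" by fastforce
    have ys: "ys \<noteq> []" using "1.prems" False by auto
    have ng: "\<not> good xs ys" using "1.prems" False by auto
    have IH: "sw q p = (xs, ys)" using "1.IH"[OF False ys ng] "1.prems" qp by simp
    show ?thesis using False qp IH by simp
  qed
next
  case (2 y ys)
  then show ?case by (cases ys) auto
next
  case (3 xs)
  then show ?case by simp
qed

lemma sw_bad:
  "sorted y \<Longrightarrow> length x + 2 \<le> length y \<Longrightarrow> \<not> good (fst (sw x y)) (snd (sw x y))"
proof (induction x y rule: sw.induct)
  case (1 x xs y ys)
  show ?case
  proof (cases "y \<le> x")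
    case True
    then show ?thesis using "1.prems" by (cases ys) auto
  next
    case False
    obtain q p where qp: "sw xs ys = (q,p)" by fastforce
    have IH: "\<not> good q p" using "1.IH"[OF False] "1.prems" qp by simp
    show ?thesis using False qp IH by simp
  qed
next
  case (2 y ys)
  then show ?case by (cases ys) auto
next
  case (3 xs)
  then show ?case by simp
qed

definition Qs :: "nat \<Rightarrow> nat \<Rightarrow> nat \<Rightarrow> nat \<Rightarrow> (nat list \<times> nat list \<times> nat list) set" where
  "Qs a b k N = {(u,v,w). u \<in> Wk a N \<and> (v,w) \<in> Hs b k N \<and> good u v}"

definition Bd :: "nat \<Rightarrow> nat \<Rightarrow> nat \<Rightarrow> nat \<Rightarrow> (nat list \<times> nat list \<times> nat list) set" where
  "Bd a b k N = {(u,v,w). u \<in> Wk a N \<and> (v,w) \<in> Hs b k N \<and> \<not> good u v}"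

definition FF :: "nat list \<times> nat list \<times> nat list \<Rightarrow> nat list \<times> nat list \<times> nat list" where
  "FF t = (case t of (u,v,w) \<Rightarrow> (fst (sw u v), snd (sw u v), w))"

lemma finite_Wk: "finite (Wk s N)"
proof -
  have "Wk s N \<subseteq> {xs. set xs \<subseteq> {1..N} \<and> length xs = s}" by (auto simp: Wk_def)
  then show ?thesis using finite_lists_length_eq[of "{1..N}" s] finite_subset by auto
qed

lemma finite_Hs: "finite (Hs r k N)"
proof -
  have "Hs r k N \<subseteq> Wk r N \<times> {xs. set xs \<subseteq> {1..N} \<and> length xs = k}" by (auto simp: Hs_def SkA_def)
  then show ?thesis using finite_lists_length_eq[of "{1..N}" k] finite_Wk finite_subset by blast
qed

lemma bij_FF:
  assumes "b \<le> a" "1 \<le> b"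
  shows "bij_betw FF (Bd a b k N) (Wk (b - 1) N \<times> Hs (a + 1) k N)"
proof (rule bij_betw_byWitness[where f' = FF])
  show "\<forall>t\<in>Bd a b k N. FF (FF t) = t"
  proof
    fix t assume "t \<in> Bd a b k N"
    then obtain u v w where t: "t = (u,v,w)" "u \<in> Wk a N" "(v,w) \<in> Hs b k N" "\<not> good u v"
      by (auto simp: Bd_def)
    have v: "v \<noteq> []" "sorted v" using t assms by (auto simp: Hs_def Wk_def)
    show "FF (FF t) = t" using sw_inv[OF v(1) t(4) v(2)] t by (simp add: FF_def)
  qed
  show "\<forall>t\<in>Wk (b - 1) N \<times> Hs (a + 1) k N. FF (FF t) = t"
  proof
    fix t assume "t \<in> Wk (b - 1) N \<times> Hs (a + 1) k N"
    then obtain q p w where t: "t = (q,p,w)" "q \<in> Wk (b-1) N" "(p,w) \<in> Hs (a+1) k N"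
      by auto
    have p: "p \<noteq> []" "sorted p" "\<not> good q p" using t assms by (auto simp: Hs_def Wk_def good_def)
    show "FF (FF t) = t" using sw_inv[OF p(1) p(3) p(2)] t by (simp add: FF_def)
  qed
  show "FF ` Bd a b k N \<subseteq> Wk (b - 1) N \<times> Hs (a + 1) k N"
  proof
    fix s assume "s \<in> FF ` Bd a b k N"
    then obtain u v w where t: "s = FF (u,v,w)" "u \<in> Wk a N" "(v,w) \<in> Hs b k N" "\<not> good u v"
      by (auto simp: Bd_def)
    have v: "v \<noteq> []" "sorted v" "sorted u" using t assms by (auto simp: Hs_def Wk_def)
    note L = sw_len[OF v(1) t(4)] and S = sw_sorted[OF v(1) t(4) v(3) v(2)]
      and H = sw_hd[OF v(1), of u] and St = sw_set[of u v]
    have "set u \<union> set v \<subseteq> {1..N}" using t by (auto simp: Hs_def Wk_def)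
    then show "s \<in> Wk (b - 1) N \<times> Hs (a + 1) k N"
      using t L S H St by (auto simp: FF_def Wk_def Hs_def)
  qed
  show "FF ` (Wk (b - 1) N \<times> Hs (a + 1) k N) \<subseteq> Bd a b k N"
  proof
    fix s assume "s \<in> FF ` (Wk (b - 1) N \<times> Hs (a + 1) k N)"
    then obtain q p w where t: "s = FF (q,p,w)" "q \<in> Wk (b-1) N" "(p,w) \<in> Hs (a+1) k N"
      by auto
    have p: "p \<noteq> []" "sorted p" "\<not> good q p" "sorted q" "length q + 2 \<le> length p"
      using t assms by (auto simp: Hs_def Wk_def good_def)
    note L = sw_len[OF p(1) p(3)] and S = sw_sorted[OF p(1) p(3) p(4) p(2)]
      and H = sw_hd[OF p(1), of q] and St = sw_set[of q p] and B = sw_bad[OF p(2) p(5)]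
    have "set q \<union> set p \<subseteq> {1..N}" using t by (auto simp: Hs_def Wk_def)
    then show "s \<in> Bd a b k N"
      using t L S H St B assms by (auto simp: FF_def Wk_def Hs_def Bd_def)
  qed
qed

lemma card_Qs:
  assumes "b \<le> a" "1 \<le> b"
  shows "card (Qs a b k N) = card (Wk a N) * card (Hs b k N) - card (Wk (b - 1) N) * card (Hs (a + 1) k N)"
proof -
  have U: "Wk a N \<times> Hs b k N = Qs a b k N \<union> Bd a b k N" by (auto simp: Qs_def Bd_def)
  have D: "Qs a b k N \<inter> Bd a b k N = {}" by (auto simp: Qs_def Bd_def)
  have F: "finite (Qs a b k N)" "finite (Bd a b k N)"
    using U finite_Wk finite_Hs by (metis finite_SigmaI finite_Un)+
  have "card (Wk a N \<times> Hs b k N) = card (Qs a b k N) + card (Bd a b k N)"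
    using U D F card_Un_disjoint by metis
  moreover have "card (Bd a b k N) = card (Wk (b - 1) N) * card (Hs (a + 1) k N)"
    using bij_betw_same_card[OF bij_FF[OF assms]] by (simp add: card_cartesian_product)
  ultimately show ?thesis by (simp add: card_cartesian_product)
qed


definition Gq :: "nat \<Rightarrow> nat \<Rightarrow> nat \<Rightarrow> nat \<Rightarrow> real" where
  "Gq a b k N = (real a - real b) * (real N - real k - 1) / ((real b + real k + 1) * (real a + real k + 1))
     * (fact (N + a - 1) * fact (N + b - 1) / (fact a * fact b * fact (N - 1) * fact k * fact (N - k - 1)))"

lemma alg1:
  fixes A B Fa Fb FM Fk Fd Fbk Fak a b k M :: real
  assumes "Fa \<noteq> 0" "Fb \<noteq> 0" "FM \<noteq> 0" "Fk \<noteq> 0" "Fd \<noteq> 0" "Fbk \<noteq> 0" "Fak \<noteq> 0"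
    "b + k + 1 \<noteq> 0" "a + k + 1 \<noteq> 0"
  shows "A/(Fa*FM) * (Fbk/(Fk*Fb)) * ((M+b+1)*B/((b+k+1)*Fbk*Fd))
       - B/(Fb*FM)*(Fak/(Fk*Fa))*((M+a+1)*A/((a+k+1)*Fak*Fd))
     = (a - b)*(M - k)/((b+k+1)*(a+k+1)) * (A*B/(Fa*Fb*FM*Fk*Fd))"
proof -
  define C where "C = A*B/(Fa*Fb*FM*Fk*Fd)"
  define p where "p = b + k + 1"
  define q where "q = a + k + 1"
  have p: "p \<noteq> 0" "q \<noteq> 0" using assms by (auto simp: p_def q_def)
  have 1: "A/(Fa*FM) * (Fbk/(Fk*Fb)) * ((M+b+1)*B/(p*Fbk*Fd)) = (M+b+1)/p * C"
    using assms p by (simp add: C_def field_simps)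
  have 2: "B/(Fb*FM)*(Fak/(Fk*Fa))*((M+a+1)*A/(q*Fak*Fd)) = (M+a+1)/q * C"
    using assms p by (simp add: C_def field_simps)
  have 3: "(M+b+1)/p - (M+a+1)/q = (a - b)*(M - k)/(p*q)"
    using p by (simp add: field_simps p_def q_def)
  have 4: "((M+b+1)/p - (M+a+1)/q) * C = (M+b+1)/p * C - (M+a+1)/q * C"
    by (rule left_diff_distrib)
  have "A/(Fa*FM) * (Fbk/(Fk*Fb)) * ((M+b+1)*B/((b+k+1)*Fbk*Fd))
       - B/(Fb*FM)*(Fak/(Fk*Fa))*((M+a+1)*A/((a+k+1)*Fak*Fd)) = (M+b+1)/p * C - (M+a+1)/q * C"
    using 1 2 unfolding p_def q_def by linarith
  also have "\<dots> = (a - b)*(M - k)/(p*q) * C" using 3 4 by simp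
  finally show ?thesis unfolding p_def q_def C_def .
qed

lemma card_Qs_real:
  assumes "Suc b \<le> a" "k + 2 \<le> N"
  shows "real (card (Qs a (Suc b) k N)) = Gq a b k N"
proof -
  define X where "X = card (Wk a N) * card (Hs (Suc b) k N)"
  define Y where "Y = card (Wk b N) * card (Hs (a + 1) k N)"
  have U: "Wk a N \<times> Hs (Suc b) k N = Qs a (Suc b) k N \<union> Bd a (Suc b) k N" by (auto simp: Qs_def Bd_def)
  have D: "Qs a (Suc b) k N \<inter> Bd a (Suc b) k N = {}" by (auto simp: Qs_def Bd_def)
  have F: "finite (Qs a (Suc b) k N)" "finite (Bd a (Suc b) k N)"
    using U finite_Wk finite_Hs by (metis finite_SigmaI finite_Un)+
  have "card (Wk a N \<times> Hs (Suc b) k N) = card (Qs a (Suc b) k N) + card (Bd a (Suc b) k N)"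
    using U D F card_Un_disjoint by metis
  moreover have "card (Bd a (Suc b) k N) = Y"
    using bij_betw_same_card[OF bij_FF[of "Suc b" a k N]] assms by (simp add: card_cartesian_product Y_def)
  ultimately have XY: "real (card (Qs a (Suc b) k N)) = real X - real Y"
    by (simp add: card_cartesian_product X_def)
  obtain M where N: "N = Suc M" using assms by (cases N) auto
  have kM: "k < M" using assms N by simp
  have b1: "real ((N + a - 1) choose a) = fact (M + a) / (fact a * fact M)"
    using binomial_fact[of a "M + a"] N by simp
  have b2: "real ((N + b - 1) choose b) = fact (M + b) / (fact b * fact M)"
    using binomial_fact[of b "M + b"] N by simp
  have b3: "real ((b + k) choose k) = fact (b + k) / (fact k * fact b)"
    using binomial_fact[of k "b + k"] by simp
  have b4: "real ((a + k) choose k) = fact (a + k) / (fact k * fact a)"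
    using binomial_fact[of k "a + k"] by simp
  have b5: "real ((N + b) choose (Suc (b + k))) = fact (Suc (M + b)) / (fact (Suc (b + k)) * fact (M - k))"
  proof -
    have "Suc (b + k) \<le> N + b" "N + b - Suc (b + k) = M - k" using kM N by auto
    then show ?thesis using binomial_fact[of "Suc (b + k)" "N + b"] N by simp
  qed
  have b6: "real ((N + a) choose (Suc (a + k))) = fact (Suc (M + a)) / (fact (Suc (a + k)) * fact (M - k))"
  proof -
    have "Suc (a + k) \<le> N + a" "N + a - Suc (a + k) = M - k" using kM N by auto
    then show ?thesis using binomial_fact[of "Suc (a + k)" "N + a"] N by simp
  qed
  have X: "real X = fact (M + a) / (fact a * fact M) * (fact (b + k) / (fact k * fact b))
      * (fact (Suc (M + b)) / (fact (Suc (b + k)) * fact (M - k)))"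
    unfolding X_def card_Wk card_Hs of_nat_mult b1 b3 b5 by simp
  have Y: "real Y = fact (M + b) / (fact b * fact M) * (fact (a + k) / (fact k * fact a))
      * (fact (Suc (M + a)) / (fact (Suc (a + k)) * fact (M - k)))"
    unfolding Y_def card_Wk card_Hs of_nat_mult b2 b4 b6 Suc_eq_plus1[symmetric] by simp
  have G: "Gq a b k N = (real a - real b) * (real M - real k) / ((real b + real k + 1) * (real a + real k + 1))
     * (fact (M + a) * fact (M + b) / (fact a * fact b * fact M * fact k * fact (M - k)))"
    unfolding Gq_def N by simp
  have e1: "(fact (Suc (M + b)) :: real) = (real M + real b + 1) * fact (M + b)" by (simp add: algebra_simps)
  have e2: "(fact (Suc (M + a)) :: real) = (real M + real a + 1) * fact (M + a)" by (simp add: algebra_simps)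
  have e3: "(fact (Suc (b + k)) :: real) = (real b + real k + 1) * fact (b + k)" by (simp add: algebra_simps)
  have e4: "(fact (Suc (a + k)) :: real) = (real a + real k + 1) * fact (a + k)" by (simp add: algebra_simps)
  have nz: "(fact (b + k) :: real) \<noteq> 0" "(fact (a + k) :: real) \<noteq> 0" "(fact a :: real) \<noteq> 0"
     "(fact b :: real) \<noteq> 0" "(fact M :: real) \<noteq> 0" "(fact k :: real) \<noteq> 0" "(fact (M - k) :: real) \<noteq> 0"
     "(fact (M + a) :: real) \<noteq> 0" "(fact (M + b) :: real) \<noteq> 0"
    by simp_all
  have p: "real b + real k + 1 \<noteq> 0" "real a + real k + 1 \<noteq> 0" by simp_all
  show ?thesis unfolding XY X Y G e1 e2 e3 e4
    using alg1[OF nz(3,4,5,6,7,1,2) p] by simp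
qed


lemma algA:
  fixes X D1 D F1 F2 Fd Fak Fbk Fk Fb Fa Fkd p q one :: real
  assumes "D1 = D" "one = 1" "D \<noteq> 0" "Fd \<noteq> 0" "Fak \<noteq> 0" "Fbk \<noteq> 0" "Fk \<noteq> 0" "Fb \<noteq> 0"
    "Fa \<noteq> 0" "Fkd \<noteq> 0" "p \<noteq> 0" "q \<noteq> 0"
  shows "X / D1 * (F1 / (Fd * (p * Fak))) * (F2 / (Fd * (q * Fbk))) * one * (Fbk / (Fk * Fb))
     * (Fak / (Fk * Fa)) * (1 / (Fkd / (Fk * (D * Fd))))
   = X * D / (q * p) * (F1 * F2 / (Fa * Fb * Fkd * Fk * (D * Fd)))"
  using assms by (simp add: field_simps)

lemma algB:
  fixes D1 P D F1 Fak Fd one q Fbk Fe Fb Fk F2 Fkd Fa E p :: real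
  assumes "D1 = D" "P = p" "one = 1" "D \<noteq> 0" "Fd \<noteq> 0" "Fak \<noteq> 0" "Fbk \<noteq> 0" "Fk \<noteq> 0" "Fb \<noteq> 0"
    "Fa \<noteq> 0" "Fkd \<noteq> 0" "p \<noteq> 0" "q \<noteq> 0" "Fe \<noteq> 0" "E \<noteq> 0"
  shows "D1 / P * (F1 / (Fak * (D * Fd))) * one * (Fak / ((q * Fbk) * Fe)) * (Fbk / (Fb * Fk))
     * (F2 / (Fb * Fkd)) * (1 / (Fa / (Fb * (E * Fe))))
   = E * D / (q * p) * (F1 * F2 / (Fa * Fb * Fkd * Fk * (D * Fd)))"
  using assms by (simp add: field_simps)

lemma formA:
  fixes a b k d :: nat
  assumes "b < a"
  shows "(real (a - b) / real (d + 1)) * real ((a+k+d+1) choose d) * real ((b+k+d+1) choose d)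
    * real (d choose 0) * real ((b+k) choose k) * real ((a+k) choose k) * (1 / real ((k+d+1) choose k))
    = Gq a b k (k+d+2)"
proof -
  have c1: "real ((a+k+d+1) choose d) = fact (a+k+d+1) / (fact d * ((real a + real k + 1) * fact (a+k)))"
    using binomial_fact[of d "a+k+d+1"] by (simp add: algebra_simps)
  have c2: "real ((b+k+d+1) choose d) = fact (b+k+d+1) / (fact d * ((real b + real k + 1) * fact (b+k)))"
    using binomial_fact[of d "b+k+d+1"] by (simp add: algebra_simps)
  have c3: "real ((b+k) choose k) = fact (b+k) / (fact k * fact b)"
    using binomial_fact[of k "b+k"] by simp
  have c4: "real ((a+k) choose k) = fact (a+k) / (fact k * fact a)"
    using binomial_fact[of k "a+k"] by simp
  have c5: "real ((k+d+1) choose k) = fact (k+d+1) / (fact k * ((real d + 1) * fact d))"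
    using binomial_fact[of k "k+d+1"] by (simp add: algebra_simps)
  have g: "Gq a b k (k+d+2) = (real a - real b) * (real d + 1) / ((real b + real k + 1) * (real a + real k + 1))
     * (fact (a+k+d+1) * fact (b+k+d+1) / (fact a * fact b * fact (k+d+1) * fact k * ((real d + 1) * fact d)))"
    unfolding Gq_def by (simp add: algebra_simps)
  have ab: "real (a - b) = real a - real b" using assms by simp
  have nz: "(fact a :: real) \<noteq> 0" "(fact b :: real) \<noteq> 0" "(fact k :: real) \<noteq> 0" "(fact d :: real) \<noteq> 0"
    "(fact (a+k) :: real) \<noteq> 0" "(fact (b+k) :: real) \<noteq> 0" "(fact (k+d+1) :: real) \<noteq> 0"
    "real a + real k + 1 \<noteq> 0" "real b + real k + 1 \<noteq> 0" "real d + 1 \<noteq> 0" by simp_all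
  have c0: "real (d choose 0) = 1" by simp
  show ?thesis unfolding c0 c1 c2 c3 c4 c5 g ab
    by (rule algA) (use nz in auto)
qed

lemma formB:
  fixes a b k d :: nat
  assumes "b < a"
  shows "(real (d + 1) / real (a + k + 1)) * real ((k+d+a+1) choose (a+k)) * real ((k+a) choose (a+k))
    * real ((a+k) choose (b+k+1)) * real ((k+b) choose b) * real ((k+d+b+1) choose b) * (1 / real (a choose b))
    = Gq a b k (k+d+2)"
proof -
  obtain e where a: "a = b + e + 1" using assms by (metis add.commute add_Suc_right less_imp_Suc_add plus_1_eq_Suc)
  have c1: "real ((k+d+a+1) choose (a+k)) = fact (a+k+d+1) / (fact (a+k) * ((real d + 1) * fact d))"
    using binomial_fact[of "a+k" "k+d+a+1"] by (simp add: algebra_simps)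
  have c3: "real ((a+k) choose (b+k+1)) = fact (a+k) / (((real b + real k + 1) * fact (b+k)) * fact e)"
    using binomial_fact[of "b+k+1" "a+k"] a by (simp add: algebra_simps)
  have c4: "real ((k+b) choose b) = fact (b+k) / (fact b * fact k)"
    using binomial_fact[of b "k+b"] by (simp add: algebra_simps)
  have c5: "real ((k+d+b+1) choose b) = fact (b+k+d+1) / (fact b * fact (k+d+1))"
    using binomial_fact[of b "k+d+b+1"] by (simp add: algebra_simps)
  have c6: "real (a choose b) = fact a / (fact b * ((real e + 1) * fact e))"
    using binomial_fact[of b a] a by (simp add: algebra_simps)
  have g: "Gq a b k (k+d+2) = (real e + 1) * (real d + 1) / ((real b + real k + 1) * (real a + real k + 1))
     * (fact (a+k+d+1) * fact (b+k+d+1) / (fact a * fact b * fact (k+d+1) * fact k * ((real d + 1) * fact d)))"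
    unfolding Gq_def using a by (simp add: algebra_simps)
  have nz: "(fact a :: real) \<noteq> 0" "(fact b :: real) \<noteq> 0" "(fact k :: real) \<noteq> 0" "(fact d :: real) \<noteq> 0"
    "(fact (a+k) :: real) \<noteq> 0" "(fact (b+k) :: real) \<noteq> 0" "(fact (k+d+1) :: real) \<noteq> 0" "(fact e :: real) \<noteq> 0"
    "real a + real k + 1 \<noteq> 0" "real b + real k + 1 \<noteq> 0" "real d + 1 \<noteq> 0" "real e + 1 \<noteq> 0" by simp_all
  have c2: "real ((k+a) choose (a+k)) = 1" by (simp add: add.commute)
  show ?thesis unfolding c1 c2 c3 c4 c5 c6 g
    by (rule algB) (use nz in auto)
qed


definition rl :: "nat \<Rightarrow> nat \<Rightarrow> nat \<Rightarrow> nat \<Rightarrow> nat" where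
  "rl l1 l2 h2 j = (if j = 0 then l1 else if j = 1 then l2 else if j < h2 then 2 else 1)"

lemma boxes_hook:
  assumes "2 \<le> h2" "h2 \<le> h1"
  shows "(j,c) \<in> boxes (hook_shape l1 l2 h1 h2) \<longleftrightarrow> j < h1 \<and> c < rl l1 l2 h2 j"
proof -
  have len: "length (hook_shape l1 l2 h1 h2) = h1" using assms by (simp add: hook_shape_def)
  have nth: "j < h1 \<Longrightarrow> hook_shape l1 l2 h1 h2 ! j = rl l1 l2 h2 j"
  proof -
    assume j: "j < h1"
    show ?thesis
    proof (cases "j < 2")
      case True
      then show ?thesis by (cases j) (auto simp: hook_shape_def rl_def nth_Cons')
    next
      case False
      then obtain i where i: "j = Suc (Suc i)" by (metis add_2_eq_Suc le_Suc_ex not_less)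
      have "hook_shape l1 l2 h1 h2 ! j = (replicate (h2 - 2) 2 @ replicate (h1 - h2) 1) ! i"
        by (simp add: hook_shape_def i)
      also have "\<dots> = (if i < h2 - 2 then 2 else 1)"
        using j i assms by (auto simp: nth_append)
      finally show ?thesis using i by (auto simp: rl_def)
    qed
  qed
  show ?thesis using len nth by (auto simp: boxes_def)
qed

lemma boxes_hook':
  assumes "2 \<le> h2" "h2 \<le> h1"
  shows "b \<in> boxes (hook_shape l1 l2 h1 h2) \<longleftrightarrow> fst b < h1 \<and> snd b < rl l1 l2 h2 (fst b)"
  using boxes_hook[OF assms] by (cases b) auto

lemma rl_anti: "2 \<le> l2 \<Longrightarrow> l2 \<le> l1 \<Longrightarrow> j \<le> j' \<Longrightarrow> rl l1 l2 h2 j' \<le> rl l1 l2 h2 j"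
  by (auto simp: rl_def)

definition colclosed :: "nat list \<Rightarrow> bool" where
  "colclosed lam \<longleftrightarrow> (\<forall>j j' c. (j',c) \<in> boxes lam \<and> j \<le> j' \<longrightarrow> (j,c) \<in> boxes lam)"

lemma rowclosed: "(j,c') \<in> boxes lam \<Longrightarrow> c \<le> c' \<Longrightarrow> (j,c) \<in> boxes lam"
  by (auto simp: boxes_def)

lemma colclosed_hook:
  assumes "2 \<le> h2" "h2 \<le> h1" "2 \<le> l2" "l2 \<le> l1"
  shows "colclosed (hook_shape l1 l2 h1 h2)"
  unfolding colclosed_def boxes_hook[OF assms(1,2)]
  using rl_anti[OF assms(3,4)] by (meson le_less_trans order_less_le_trans)

lemma SSYT_row_mono:
  assumes "is_SSYT lam T" "(j,c') \<in> boxes lam" "c \<le> c'"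
  shows "T (j,c) \<le> T (j,c')"
  using assms(2,3)
proof (induction c' arbitrary: c)
  case 0
  then show ?case by simp
next
  case (Suc c')
  show ?case
  proof (cases "c = Suc c'")
    case True then show ?thesis by simp
  next
    case False
    then have "c \<le> c'" using Suc.prems by simp
    moreover have "(j,c') \<in> boxes lam" using Suc.prems rowclosed by fastforce
    ultimately have "T (j,c) \<le> T (j,c')" using Suc.IH by blast
    moreover have "T (j,c') \<le> T (j, Suc c')" using assms(1) Suc.prems `(j,c') \<in> boxes lam`
      by (auto simp: is_SSYT_def)
    ultimately show ?thesis by simp
  qed
qed

lemma SSYT_col_strict:
  assumes "is_SSYT lam T" "colclosed lam" "(j',c) \<in> boxes lam" "j < j'"
  shows "T (j,c) < T (j',c)"
  using assms(3,4)
proof (induction j' arbitrary: j)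
  case 0
  then show ?case by simp
next
  case (Suc j')
  have b: "(j',c) \<in> boxes lam" using Suc.prems assms(2) unfolding colclosed_def
    by (meson le_SucI order_refl)
  have s: "T (j',c) < T (Suc j', c)" using assms(1) Suc.prems b by (auto simp: is_SSYT_def)
  show ?case
  proof (cases "j = j'")
    case True then show ?thesis using s by simp
  next
    case False
    then have "j < j'" using Suc.prems by simp
    then have "T (j,c) < T (j',c)" using Suc.IH b by blast
    then show ?thesis using s by simp
  qed
qed

lemma SSYT_col_mono:
  assumes "is_SSYT lam T" "colclosed lam" "(j',c) \<in> boxes lam" "j \<le> j'"
  shows "T (j,c) \<le> T (j',c)"
  using SSYT_col_strict[OF assms(1,2,3)] assms(4) by (metis le_neq_implies_less less_imp_le order_refl)

lemma SSYT_mono: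
  assumes "is_SSYT lam T" "colclosed lam" "(j',c') \<in> boxes lam" "j \<le> j'" "c \<le> c'"
  shows "T (j,c) \<le> T (j',c')"
proof -
  have "(j,c') \<in> boxes lam" using assms(2,3,4) by (auto simp: colclosed_def)
  then have "T (j,c) \<le> T (j,c')" using SSYT_row_mono[OF assms(1)] assms(5) by blast
  also have "\<dots> \<le> T (j',c')" using SSYT_col_mono[OF assms(1,2,3,4)] .
  finally show ?thesis .
qed

lemma finite_boxes: "finite (boxes lam)"
proof -
  have "boxes lam \<subseteq> {..<length lam} \<times> {..<Max (set lam) + 1}"
  proof
    fix x assume "x \<in> boxes lam"
    then obtain j c where x: "x = (j,c)" "j < length lam" "c < lam ! j" by (auto simp: boxes_def)
    have "lam ! j \<le> Max (set lam)" using x(2) by (auto intro: Max_ge)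
    then have "c < Max (set lam) + 1" using x(3) by linarith
    then show "x \<in> {..<length lam} \<times> {..<Max (set lam) + 1}" using x by auto
  qed
  then show ?thesis by (rule finite_subset) simp
qed

lemma le_Max_T: "b \<in> boxes lam \<Longrightarrow> T b \<le> Max (T ` boxes lam)"
  using finite_boxes by (auto intro: Max_ge)


locale hk =
  fixes l1 l2 h1 h2 :: nat
  assumes l12: "l2 \<le> l1" and l2: "2 \<le> l2" and h12: "h2 \<le> h1" and h2: "2 \<le> h2"
begin

abbreviation "lam \<equiv> hook_shape l1 l2 h1 h2"
abbreviation "B \<equiv> boxes lam"

lemma inB: "(j,c) \<in> B \<longleftrightarrow> j < h1 \<and> c < rl l1 l2 h2 j"
  using boxes_hook[OF h2 h12] .

lemma cc: "colclosed lam" using colclosed_hook[OF h2 h12 l2 l12] .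

lemma B0: "(0,c) \<in> B \<longleftrightarrow> c < l1" using inB l12 l2 h12 h2 by (auto simp: rl_def)
lemma B1: "(1,c) \<in> B \<longleftrightarrow> c < l2" using inB l12 l2 h12 h2 by (auto simp: rl_def)
lemma B1': "(Suc 0,c) \<in> B \<longleftrightarrow> c < l2" using B1 by simp
lemma Bc1': "(j,Suc 0) \<in> B \<longleftrightarrow> j < h2" using inB l12 l2 h12 h2 by (auto simp: rl_def)
lemma Bc0: "(j,0) \<in> B \<longleftrightarrow> j < h1" using inB l12 l2 h12 h2 by (auto simp: rl_def)
lemma Bc1: "(j,1) \<in> B \<longleftrightarrow> j < h2" using inB l12 l2 h12 h2 by (auto simp: rl_def)
lemma Bhi: "(j,c) \<in> B \<Longrightarrow> 2 \<le> j \<Longrightarrow> c < 2" using inB by (auto simp: rl_def split: if_splits)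

lemma Bcases: "(j,c) \<in> B \<longleftrightarrow> (j = 0 \<and> c < l1) \<or> (j = 1 \<and> c < l2) \<or> (2 \<le> j \<and> j < h2 \<and> c < 2) \<or> (h2 \<le> j \<and> j < h1 \<and> c = 0)"
  using inB l12 l2 h12 h2 by (auto simp: rl_def)

definition TA :: "(nat \<times> nat \<Rightarrow> nat) \<Rightarrow> nat list \<times> nat list \<times> nat list" where
  "TA T = (map (\<lambda>c. T (0,c)) [1..<l1], map (\<lambda>c. T (1,c)) [1..<l2], map (\<lambda>j. T (j,1)) [2..<h2])"

definition IA :: "nat list \<times> nat list \<times> nat list \<Rightarrow> (nat \<times> nat \<Rightarrow> nat)" where
  "IA t = (\<lambda>(j,c). if (j,c) \<in> B then (if c = 0 then j + 1 else if j = 0 then fst t ! (c - 1)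
      else if j = 1 then fst (snd t) ! (c - 1) else snd (snd t) ! (j - 2)) else 0)"

lemma QYT_col0:
  assumes "T \<in> QYT_eq h1 lam" "j < h1"
  shows "T (j,0) = j + 1"
proof -
  have S: "is_SSYT lam T" and M: "Max (T ` B) = h1" using assms by (auto simp: QYT_eq_def)
  have lo: "j + 1 \<le> T (j,0)" if "j < h1" for j
    using that
  proof (induction j)
    case 0
    then show ?case using S Bc0 by (auto simp: is_SSYT_def)
  next
    case (Suc j)
    then have "T (j,0) < T (Suc j, 0)" using SSYT_col_strict[OF S cc] Bc0 by auto
    then show ?case using Suc by simp
  qed
  have hi: "T (h1 - 1 - i, 0) + i \<le> h1" if "i < h1" for i
    using that
  proof (induction i)
    case 0
    have "T (h1 - 1, 0) \<le> h1" using le_Max_T[of "(h1-1,0)" lam T] Bc0 M 0 by simp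
    then show ?case by simp
  next
    case (Suc i)
    have "T (h1 - 1 - Suc i, 0) < T (h1 - 1 - i, 0)"
      using SSYT_col_strict[OF S cc, of "h1 - 1 - i" 0 "h1 - 1 - Suc i"] Bc0 Suc.prems by auto
    then show ?case using Suc by simp
  qed
  have "T (j,0) + (h1 - 1 - j) \<le> h1" using hi[of "h1 - 1 - j"] assms(2) by simp
  then show ?thesis using lo[OF assms(2)] assms(2) by simp
qed

lemma QYT_range:
  assumes "T \<in> QYT_eq m lam" "b \<in> B"
  shows "1 \<le> T b \<and> T b \<le> m"
  using assms le_Max_T[of b lam T] by (auto simp: QYT_eq_def is_SSYT_def)

lemma TA_in:
  assumes "T \<in> QYT_eq h1 lam"
  shows "TA T \<in> Qs (l1 - 1) (l2 - 1) (h2 - 2) h1"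
proof -
  have S: "is_SSYT lam T" using assms by (auto simp: QYT_eq_def)
  note R = QYT_range[OF assms]
  have u: "map (\<lambda>c. T (0,c)) [1..<l1] \<in> Wk (l1 - 1) h1"
    unfolding Wk_def
  proof (intro CollectI conjI)
    show "sorted (map (\<lambda>c. T (0,c)) [1..<l1])"
      unfolding sorted_iff_nth_mono using SSYT_row_mono[OF S] B0 by auto
    show "set (map (\<lambda>c. T (0,c)) [1..<l1]) \<subseteq> {1..h1}" using R B0 by auto
  qed simp
  have v: "map (\<lambda>c. T (1,c)) [1..<l2] \<in> Wk (l2 - 1) h1"
    unfolding Wk_def
  proof (intro CollectI conjI)
    show "sorted (map (\<lambda>c. T (1,c)) [1..<l2])"
      unfolding sorted_iff_nth_mono using SSYT_row_mono[OF S] B1 by auto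
    show "set (map (\<lambda>c. T (1,c)) [1..<l2]) \<subseteq> {1..h1}" using R B1 by auto
  qed simp
  have w: "map (\<lambda>j. T (j,1)) [2..<h2] \<in> SkA (h2 - 2) {1..h1}"
    unfolding SkA_def
  proof (intro CollectI conjI)
    show "sorted_wrt (<) (map (\<lambda>j. T (j,1)) [2..<h2])"
      unfolding sorted_wrt_iff_nth_less using SSYT_col_strict[OF S cc] Bc1 by auto
    show "set (map (\<lambda>j. T (j,1)) [2..<h2]) \<subseteq> {1..h1}" using R Bc1 by auto
  qed simp
  have hv: "hd (map (\<lambda>c. T (1,c)) [1..<l2]) = T (1,1)" using l2 by (simp add: hd_map upt_rec)
  have hw: "\<forall>y\<in>set (map (\<lambda>j. T (j,1)) [2..<h2]). T (1,1) < y"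
    using SSYT_col_strict[OF S cc] Bc1 by auto
  have g: "good (map (\<lambda>c. T (0,c)) [1..<l1]) (map (\<lambda>c. T (1,c)) [1..<l2])"
    unfolding good_def using l12 SSYT_col_strict[OF S cc, of 1 _ 0] B1 by auto
  show ?thesis using u v w hv hw g by (simp add: TA_def Qs_def Hs_def)
qed

lemma sorted_strict_lb:
  assumes "sorted_wrt (<) (w::nat list)" "i < length w"
  shows "w ! 0 + i \<le> w ! i"
  using assms(2)
proof (induction i)
  case 0 then show ?case by simp
next
  case (Suc i)
  have "w ! i < w ! Suc i" using assms(1) Suc.prems sorted_wrt_nth_less by blast
  then show ?case using Suc by simp
qed

lemma Bcases6:
  assumes "(j,c) \<in> B"
  obtains "c = 0" "j < h1" | "j = 0" "0 < c" "c < l1" | "j = 1" "0 < c" "c < l2"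
    | "2 \<le> j" "j < h2" "c = 1"
proof -
  have "(j = 0 \<and> c < l1) \<or> (j = 1 \<and> c < l2) \<or> (2 \<le> j \<and> j < h2 \<and> c < 2) \<or> (h2 \<le> j \<and> j < h1 \<and> c = 0)"
    using assms Bcases by blast
  moreover have "c = 0 \<Longrightarrow> j < h1" using assms Bc0 rowclosed by blast
  ultimately show thesis using that h12 l12 by (cases "c = 0") (auto simp: less_2_cases_iff)
qed

lemma IA_in:
  assumes "t \<in> Qs (l1 - 1) (l2 - 1) (h2 - 2) h1"
  shows "IA t \<in> QYT_eq h1 lam"
proof -
  obtain u v w where t: "t = (u,v,w)" by (cases t) auto
  have u: "length u = l1 - 1" "sorted u" "set u \<subseteq> {1..h1}"
   and v: "length v = l2 - 1" "sorted v" "set v \<subseteq> {1..h1}"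
   and w: "length w = h2 - 2" "sorted_wrt (<) w" "set w \<subseteq> {1..h1}" "\<forall>y\<in>set w. hd v < y"
   and g: "good u v"
    using assms t by (auto simp: Qs_def Hs_def Wk_def SkA_def)
  define T where "T = IA t"
  have Tout: "\<And>j c. (j,c) \<notin> B \<Longrightarrow> T (j,c) = 0" by (simp add: T_def IA_def)
  have Tc0: "\<And>j. j < h1 \<Longrightarrow> T (j,0) = j + 1" using Bc0 by (simp add: T_def IA_def)
  have Tr0: "\<And>c. 0 < c \<Longrightarrow> c < l1 \<Longrightarrow> T (0,c) = u ! (c - 1)" using B0 by (simp add: T_def IA_def t)
  have Tr1: "\<And>c. 0 < c \<Longrightarrow> c < l2 \<Longrightarrow> T (1,c) = v ! (c - 1)" using B1 by (simp add: T_def IA_def t)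
  have Tr2: "\<And>j. 2 \<le> j \<Longrightarrow> j < h2 \<Longrightarrow> T (j,1) = w ! (j - 2)" using Bc1 by (simp add: T_def IA_def t)
  have un: "\<And>i. i < l1 - 1 \<Longrightarrow> 1 \<le> u ! i \<and> u ! i \<le> h1"
  proof -
    fix i assume "i < l1 - 1"
    then have "u ! i \<in> set u" using u(1) by simp
    then show "1 \<le> u ! i \<and> u ! i \<le> h1" using u(3) by auto
  qed
  have vn: "\<And>i. i < l2 - 1 \<Longrightarrow> 1 \<le> v ! i \<and> v ! i \<le> h1"
  proof -
    fix i assume "i < l2 - 1"
    then have "v ! i \<in> set v" using v(1) by simp
    then show "1 \<le> v ! i \<and> v ! i \<le> h1" using v(3) by auto
  qed
  have wn: "\<And>i. i < h2 - 2 \<Longrightarrow> 1 \<le> w ! i \<and> w ! i \<le> h1"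
  proof -
    fix i assume "i < h2 - 2"
    then have "w ! i \<in> set w" using w(1) by simp
    then show "1 \<le> w ! i \<and> w ! i \<le> h1" using w(3) by auto
  qed
  have hv: "hd v = v ! 0" using v l2 by (cases v) auto
  have gv: "\<And>i. i < l2 - 1 \<Longrightarrow> u ! i < v ! i" using g v by (auto simp: good_def)
  have v0: "2 \<le> v ! 0" using gv[of 0] un[of 0] l2 l12 by simp
  have w0: "\<And>i. i < h2 - 2 \<Longrightarrow> v ! 0 < w ! i"
  proof -
    fix i assume "i < h2 - 2"
    then have "w ! i \<in> set w" using w(1) by simp
    then show "v ! 0 < w ! i" using w(4) hv by auto
  qed
  have wlb: "\<And>i. i < h2 - 2 \<Longrightarrow> i + 3 \<le> w ! i"
  proof -
    fix i assume i: "i < h2 - 2"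
    have "w ! 0 + i \<le> w ! i" using sorted_strict_lb[OF w(2)] i w(1) by simp
    moreover have "v ! 0 < w ! 0" using w0[of 0] i by simp
    then have "3 \<le> w ! 0" using v0 by simp
    ultimately show "i + 3 \<le> w ! i" by simp
  qed
  have rng: "\<And>b. b \<in> B \<Longrightarrow> 1 \<le> T b \<and> T b \<le> h1"
  proof -
    fix b assume b: "b \<in> B"
    obtain j c where jc: "b = (j,c)" by (cases b)
    have "1 \<le> T (j,c) \<and> T (j,c) \<le> h1" using b[unfolded jc]
    proof (cases rule: Bcases6)
      case 1 then show ?thesis using Tc0 by simp
    next
      case 2 then show ?thesis using Tr0 un[of "c - 1"] by simp
    next
      case 3 then show ?thesis using Tr1 vn[of "c - 1"] by simp
    next
      case 4 then show ?thesis using Tr2 wn[of "j - 2"] by simp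
    qed
    then show "1 \<le> T b \<and> T b \<le> h1" using jc by simp
  qed
  have S: "is_SSYT lam T"
    unfolding is_SSYT_def
  proof (intro conjI allI impI ballI)
    show "\<And>b. b \<notin> B \<Longrightarrow> T b = 0" using Tout by (metis surj_pair)
  next
    fix b assume b: "b \<in> B"
    show "1 \<le> T b" using rng[OF b] by simp
  next
    fix j c assume a: "(j,c) \<in> B \<and> (j, Suc c) \<in> B"
    then have a2: "(j, Suc c) \<in> B" by simp
    show "T (j,c) \<le> T (j, Suc c)"
      using a2
    proof (cases rule: Bcases6)
      case 1 then show ?thesis by simp
    next
      case 2
      show ?thesis
      proof (cases "c = 0")
        case True then show ?thesis using 2 Tc0 Tr0 un[of 0] l12 l2 h12 h2 by simp
      next
        case False
        have "u ! (c - 1) \<le> u ! c" using u(1,2) 2 False by (auto simp: sorted_iff_nth_mono)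
        then show ?thesis using 2 False Tr0 by simp
      qed
    next
      case 3
      show ?thesis
      proof (cases "c = 0")
        case True then show ?thesis using 3 Tc0 Tr1 v0 h12 h2 by simp
      next
        case False
        have "v ! (c - 1) \<le> v ! c" using v(1,2) 3 False by (auto simp: sorted_iff_nth_mono)
        then show ?thesis using 3 False Tr1 by simp
      qed
    next
      case 4
      then have "c = 0" by simp
      then show ?thesis using 4 Tc0 Tr2 wlb[of "j - 2"] h12 by simp
    qed
  next
    fix j c assume a: "(j,c) \<in> B \<and> (Suc j, c) \<in> B"
    then have a2: "(Suc j, c) \<in> B" by simp
    show "T (j,c) < T (Suc j, c)"
      using a2
    proof (cases rule: Bcases6)
      case 1 then show ?thesis using Tc0 by simp
    next
      case 2 then show ?thesis by simp
    next
      case 3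
      then have "j = 0" by simp
      then show ?thesis using 3 Tr0 Tr1 gv[of "c - 1"] l12 by simp
    next
      case 4
      show ?thesis
      proof (cases "j = 1")
        case True
        then show ?thesis using 4 Tr1 Tr2 w0[of 0] l2 by simp
      next
        case False
        then have j2: "2 \<le> j" using 4 by simp
        have "w ! (j - 2) < w ! (Suc j - 2)"
          using w(2) w(1) j2 4 sorted_wrt_nth_less by fastforce
        then show ?thesis using 4 j2 Tr2 by simp
      qed
    qed
  qed
  have top: "T (h1 - 1, 0) = h1" "(h1 - 1, 0) \<in> B" using Tc0 Bc0 h12 h2 by auto
  have M: "Max (T ` B) = h1"
  proof (rule Max_eqI)
    show "h1 \<in> T ` B" using top by (metis image_eqI)
  qed (use finite_boxes rng in auto)
  have Q: "quasi_yamanouchi lam T"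
    unfolding quasi_yamanouchi_def
  proof (intro allI impI)
    fix i assume i: "1 < i \<and> i \<in> T ` B"
    then obtain b where "b \<in> B" "i = T b" by blast
    then have ih: "i \<le> h1" using rng by blast
    have b1: "(i - 2, 0) \<in> B" "T (i - 2, 0) = i - 1" using i ih Bc0 Tc0 by auto
    have b2: "(i - 1, 0) \<in> B" "T (i - 1, 0) = i" using i ih Bc0 Tc0 by auto
    have fin: "finite {c. \<exists>j. (j, c) \<in> B \<and> T (j, c) = i}"
    proof (rule finite_subset)
      show "{c. \<exists>j. (j, c) \<in> B \<and> T (j, c) = i} \<subseteq> snd ` B" by force
    qed (simp add: finite_boxes)
    have "leftmost_col lam T i \<le> 0"
    proof -
      have "0 \<in> {c. \<exists>j. (j, c) \<in> B \<and> T (j, c) = i}" using b2 by blast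
      then show ?thesis unfolding leftmost_col_def by (rule Min_le[OF fin])
    qed
    then show "\<exists>j c. (j, c) \<in> B \<and> T (j, c) = i - 1 \<and> leftmost_col lam T i \<le> c"
      using b1 by blast
  qed
  show ?thesis using S Q M by (simp add: QYT_eq_def T_def)
qed

lemma TA_IA:
  assumes "t \<in> Qs (l1 - 1) (l2 - 1) (h2 - 2) h1"
  shows "TA (IA t) = t"
proof -
  obtain u v w where t: "t = (u,v,w)" by (cases t) auto
  have len: "length u = l1 - 1" "length v = l2 - 1" "length w = h2 - 2"
    using assms t by (auto simp: Qs_def Hs_def Wk_def SkA_def)
  have 1: "map (\<lambda>c. IA t (0,c)) [1..<l1] = u"
  proof (rule nth_equalityI)
    show "length (map (\<lambda>c. IA t (0,c)) [1..<l1]) = length u" using len by simp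
    fix i assume "i < length (map (\<lambda>c. IA t (0,c)) [1..<l1])"
    then have "Suc i < l1" by simp
    then show "map (\<lambda>c. IA t (0,c)) [1..<l1] ! i = u ! i" by (simp add: IA_def t B0)
  qed
  have 2: "map (\<lambda>c. IA t (1,c)) [1..<l2] = v"
  proof (rule nth_equalityI)
    show "length (map (\<lambda>c. IA t (1,c)) [1..<l2]) = length v" using len by simp
    fix i assume "i < length (map (\<lambda>c. IA t (1,c)) [1..<l2])"
    then have "Suc i < l2" by simp
    then show "map (\<lambda>c. IA t (1,c)) [1..<l2] ! i = v ! i" by (simp add: IA_def t B1')
  qed
  have 3: "map (\<lambda>j. IA t (j,1)) [2..<h2] = w"
  proof (rule nth_equalityI)
    show "length (map (\<lambda>j. IA t (j,1)) [2..<h2]) = length w" using len by simp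
    fix i assume "i < length (map (\<lambda>j. IA t (j,1)) [2..<h2])"
    then have "Suc (Suc i) < h2" by simp
    then show "map (\<lambda>j. IA t (j,1)) [2..<h2] ! i = w ! i" by (simp add: IA_def t Bc1')
  qed
  show ?thesis using 1 2 3 by (simp add: TA_def t)
qed

lemma IA_TA:
  assumes "T \<in> QYT_eq h1 lam"
  shows "IA (TA T) = T"
proof (rule ext)
  fix b :: "nat \<times> nat"
  obtain j c where b: "b = (j,c)" by (cases b)
  have S: "is_SSYT lam T" using assms by (auto simp: QYT_eq_def)
  show "IA (TA T) b = T b"
  proof (cases "(j,c) \<in> B")
    case False
    then show ?thesis using S b by (auto simp: IA_def is_SSYT_def)
  next
    case True
    then have j: "j < h1" using Bc0 rowclosed by blast
    show ?thesis
    proof (cases "c = 0")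
      case True
      then show ?thesis using QYT_col0[OF assms j] `(j,c) \<in> B` unfolding b IA_def by simp
    next
      case False
      note cF = False
      from `(j,c) \<in> B` show ?thesis
      proof (cases rule: Bcases6)
        case 1 then show ?thesis using cF by simp
      next
        case 2
        then have "[Suc 0..<l1] ! (c - Suc 0) = c" by simp
        then show ?thesis unfolding b IA_def TA_def using B0 2 by simp
      next
        case 3
        then have "[Suc 0..<l2] ! (c - Suc 0) = c" by simp
        then show ?thesis unfolding b IA_def TA_def using B1' 3 by simp
      next
        case 4
        then have "IA (TA T) (j,c) = map (\<lambda>j. T (j,1)) [2..<h2] ! (j - 2)"
          unfolding IA_def TA_def using Bc1 by simp
        also have "\<dots> = T (j,1)"
        proof -
          have "Suc (Suc (j - 2)) = j" using 4 by simp
          then show ?thesis using 4 nth_upt[of 2 "j - 2" h2] by simp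
        qed
        finally show ?thesis using 4 b by simp
      qed
    qed
  qed
qed

lemma card_caseA: "card (QYT_eq h1 lam) = card (Qs (l1 - 1) (l2 - 1) (h2 - 2) h1)"
proof (rule bij_betw_same_card[of TA])
  show "bij_betw TA (QYT_eq h1 lam) (Qs (l1 - 1) (l2 - 1) (h2 - 2) h1)"
    by (rule bij_betw_byWitness[where f' = IA]) (use IA_TA TA_IA TA_in IA_in in auto)
qed

end


context hk
begin

definition mB :: nat where "mB = l2 + h1 + h2 - 3"
definition UU :: "(nat \<times> nat) set" where "UU = {b \<in> B. 1 \<le> fst b}"

lemma UU_eq: "UU = ({1} \<times> {..<l2}) \<union> ({2..<h2} \<times> {0,1}) \<union> ({h2..<h1} \<times> {0})"
proof (rule set_eqI)
  fix x :: "nat \<times> nat"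
  obtain j c where x: "x = (j,c)" by (cases x)
  show "x \<in> UU \<longleftrightarrow> x \<in> ({1} \<times> {..<l2}) \<union> ({2..<h2} \<times> {0,1}) \<union> ({h2..<h1} \<times> {0})"
    unfolding x UU_def using Bcases[of j c] h12 h2 l12 l2 by auto
qed

lemma card_UU: "card UU = mB - 1"
proof -
  have d1: "({1::nat} \<times> {..<l2}) \<inter> ({2..<h2} \<times> {0::nat,1}) = {}" by auto
  have d2: "(({1::nat} \<times> {..<l2}) \<union> ({2..<h2} \<times> {0::nat,1})) \<inter> ({h2..<h1} \<times> {0}) = {}" using h2 by auto
  have "card UU = card (({1} \<times> {..<l2}) \<union> ({2..<h2} \<times> {0::nat,1})) + card ({h2..<h1} \<times> {0::nat})"
    unfolding UU_eq by (rule card_Un_disjoint[OF _ _ d2]) auto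
  also have "card (({1} \<times> {..<l2}) \<union> ({2..<h2} \<times> {0::nat,1})) = card ({1::nat} \<times> {..<l2}) + card ({2..<h2} \<times> {0::nat,1})"
    by (rule card_Un_disjoint[OF _ _ d1]) auto
  finally have "card UU = l2 + (h2 - 2) * 2 + (h1 - h2)" by (simp add: card_cartesian_product)
  then show ?thesis using h12 h2 l2 by (simp add: mB_def)
qed

lemma finite_UU: "finite UU" using finite_boxes by (simp add: UU_def)

lemma UU_B: "x \<in> UU \<Longrightarrow> x \<in> B" by (simp add: UU_def)
lemma UU_fst: "x \<in> UU \<Longrightarrow> 1 \<le> fst x" by (simp add: UU_def)
lemma notUU: "(j,c) \<in> B \<Longrightarrow> (j,c) \<notin> UU \<Longrightarrow> j = 0" by (simp add: UU_def)

lemma mB_ge: "3 \<le> mB" using l2 h2 h12 by (simp add: mB_def)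

lemma CB_S: "T \<in> QYT_eq m lam \<Longrightarrow> is_SSYT lam T" by (simp add: QYT_eq_def)

lemma lm_le:
  assumes "(j,c) \<in> B" "T (j,c) = i"
  shows "leftmost_col lam T i \<le> c"
proof -
  have fin: "finite {c. \<exists>j. (j, c) \<in> B \<and> T (j, c) = i}"
    by (rule finite_subset[of _ "snd ` B"]) (force, simp add: finite_boxes)
  have "c \<in> {c. \<exists>j. (j, c) \<in> B \<and> T (j, c) = i}" using assms by blast
  then show ?thesis unfolding leftmost_col_def by (rule Min_le[OF fin])
qed

lemma lm_in:
  assumes "i \<in> T ` B"
  shows "\<exists>j. (j, leftmost_col lam T i) \<in> B \<and> T (j, leftmost_col lam T i) = i"
proof -
  have fin: "finite {c. \<exists>j. (j, c) \<in> B \<and> T (j, c) = i}"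
    by (rule finite_subset[of _ "snd ` B"]) (force, simp add: finite_boxes)
  have ne: "{c. \<exists>j. (j, c) \<in> B \<and> T (j, c) = i} \<noteq> {}" using assms by force
  have "Min {c. \<exists>j. (j, c) \<in> B \<and> T (j, c) = i} \<in> {c. \<exists>j. (j, c) \<in> B \<and> T (j, c) = i}"
    by (rule Min_in[OF fin ne])
  then show ?thesis unfolding leftmost_col_def by blast
qed

lemma QY_step:
  assumes "T \<in> QYT_eq m lam" "1 < i" "i \<in> T ` B"
  shows "\<exists>j c. (j,c) \<in> B \<and> T (j,c) = i - 1 \<and> leftmost_col lam T i \<le> c"
  using assms by (auto simp: QYT_eq_def quasi_yamanouchi_def)

lemma occ_all:
  assumes T: "T \<in> QYT_eq m lam" and i: "1 \<le> i" "i \<le> m"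
  shows "i \<in> T ` B"
proof -
  have top: "m \<in> T ` B"
  proof -
    have "B \<noteq> {}" using B0[of 0] l12 l2 by auto
    then have "Max (T ` B) \<in> T ` B" using finite_boxes by (intro Max_in) auto
    then show ?thesis using T by (simp add: QYT_eq_def)
  qed
  have "\<forall>d. d < m \<longrightarrow> m - d \<in> T ` B"
  proof (intro allI)
    fix d show "d < m \<longrightarrow> m - d \<in> T ` B"
    proof (induction d)
      case 0 then show ?case using top by simp
    next
      case (Suc d)
      show ?case
      proof
        assume d: "Suc d < m"
        then have "m - d \<in> T ` B" using Suc by simp
        moreover have "1 < m - d" using d by simp
        ultimately obtain j c where "(j,c) \<in> B" "T (j,c) = m - d - 1"
          using QY_step[OF T] by blast
        then show "m - Suc d \<in> T ` B" by (metis diff_Suc_eq_diff_pred diff_commute image_eqI)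
      qed
    qed
  qed
  then show ?thesis using i by (metis diff_diff_cancel diff_less le_less_trans less_one not_less)
qed

lemma row0_lt:
  assumes "T \<in> QYT_eq m lam" "x \<in> UU"
  shows "T (0, snd x) < T x"
proof -
  obtain j c where x: "x = (j,c)" by (cases x)
  have "(j,c) \<in> B" "0 < j" using assms x by (auto simp: UU_def)
  then show ?thesis using SSYT_col_strict[OF CB_S[OF assms(1)] cc] x by auto
qed

lemma UU_c0: "(j,0) \<in> UU \<longleftrightarrow> 1 \<le> j \<and> j < h1" using Bc0 by (auto simp: UU_def)
lemma UU_c1: "(j,1) \<in> UU \<longleftrightarrow> 1 \<le> j \<and> j < h2" using Bc1 by (auto simp: UU_def)
lemma UU_c1': "(j,Suc 0) \<in> UU \<longleftrightarrow> 1 \<le> j \<and> j < h2" using Bc1' by (auto simp: UU_def)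
lemma UU_r1: "(1,c) \<in> UU \<longleftrightarrow> c < l2" using B1 by (auto simp: UU_def)
lemma UU_r1': "(Suc 0,c) \<in> UU \<longleftrightarrow> c < l2" using B1' by (auto simp: UU_def)

lemma occ_U:
  assumes T: "T \<in> QYT_eq mB lam" and i: "2 \<le> i" "i \<le> mB"
  shows "\<exists>x\<in>UU. T x = i"
proof (rule ccontr)
  assume no: "\<not> (\<exists>x\<in>UU. T x = i)"
  have iB: "i \<in> T ` B" using occ_all[OF T] i by simp
  define L where "L = leftmost_col lam T i"
  obtain j0 where j0: "(j0, L) \<in> B" "T (j0, L) = i" using lm_in[OF iB] unfolding L_def by blast
  have "j0 = 0" using no j0 notUU by blast
  obtain j c where jc: "(j,c) \<in> B" "T (j,c) = i - 1" "L \<le> c"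
    using QY_step[OF T _ iB] i unfolding L_def by auto
  have "T (0, L) \<le> T (j,c)" using SSYT_mono[OF CB_S[OF T] cc jc(1)] jc(3) by simp
  then show False using j0 `j0 = 0` jc(2) i by simp
qed

lemma UU_range:
  assumes T: "T \<in> QYT_eq mB lam" and x: "x \<in> UU"
  shows "2 \<le> T x \<and> T x \<le> mB"
proof -
  have "T (0, snd x) < T x" using row0_lt[OF T x] .
  moreover have "(0, snd x) \<in> B" using x cc unfolding colclosed_def UU_def by (cases x) auto
  then have "1 \<le> T (0, snd x)" using CB_S[OF T] by (auto simp: is_SSYT_def)
  moreover have "T x \<le> mB" using QYT_range[OF T UU_B[OF x]] by simp
  ultimately show ?thesis by simp
qed

lemma UU_img:
  assumes T: "T \<in> QYT_eq mB lam"
  shows "T ` UU = {2..mB}"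
proof
  show "T ` UU \<subseteq> {2..mB}" using UU_range[OF T] by auto
  show "{2..mB} \<subseteq> T ` UU" using occ_U[OF T] by force
qed

lemma UU_inj:
  assumes T: "T \<in> QYT_eq mB lam"
  shows "inj_on T UU"
proof (rule eq_card_imp_inj_on[OF finite_UU])
  show "card (T ` UU) = card UU" unfolding UU_img[OF T] card_UU using mB_ge by simp
qed

lemma T00:
  assumes T: "T \<in> QYT_eq mB lam"
  shows "T (0,0) = 1"
proof -
  have "1 \<in> T ` B" using occ_all[OF T] mB_ge by simp
  then obtain j c where jc: "(j,c) \<in> B" "T (j,c) = 1" by auto
  have "T (0,0) \<le> T (j,c)" using SSYT_mono[OF CB_S[OF T] cc jc(1)] by simp
  moreover have "1 \<le> T (0,0)" using CB_S[OF T] B0[of 0] l12 l2 by (auto simp: is_SSYT_def)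
  ultimately show ?thesis using jc by simp
qed

lemma lemX:
  assumes T: "T \<in> QYT_eq mB lam" and x1: "x1 \<in> UU" and x2: "x2 \<in> UU"
    and c12: "snd x1 < snd x2" and v12: "T x1 < T x2"
  shows "\<exists>c<l1. T x1 \<le> T (0,c) \<and> T (0,c) < T x2"
proof (rule ccontr)
  assume no: "\<not> (\<exists>c<l1. T x1 \<le> T (0,c) \<and> T (0,c) < T x2)"
  have inj: "inj_on T UU" using UU_inj[OF T] .
  have occ: "\<And>j c. (j,c) \<in> B \<Longrightarrow> T x1 \<le> T (j,c) \<Longrightarrow> T (j,c) < T x2 \<Longrightarrow> (j,c) \<in> UU"
  proof -
    fix j c assume a: "(j,c) \<in> B" "T x1 \<le> T (j,c)" "T (j,c) < T x2"
    show "(j,c) \<in> UU"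
    proof (rule ccontr)
      assume "(j,c) \<notin> UU"
      then have "j = 0" using notUU a(1) by blast
      then show False using no a B0 by blast
    qed
  qed
  have rx2: "T x2 \<le> mB" "2 \<le> T x1" using UU_range[OF T x2] UU_range[OF T x1] by auto
  have claim: "\<And>d. T x1 + d < T x2 \<Longrightarrow> \<exists>y\<in>UU. T y = T x1 + d \<and> snd y \<le> snd x1"
  proof -
    fix d show "T x1 + d < T x2 \<Longrightarrow> \<exists>y\<in>UU. T y = T x1 + d \<and> snd y \<le> snd x1"
    proof (induction d)
      case 0 then show ?case using x1 by auto
    next
      case (Suc d)
      then obtain y where y: "y \<in> UU" "T y = T x1 + d" "snd y \<le> snd x1" by auto
      define i where "i = T x1 + Suc d"
      have i: "2 \<le> i" "i \<le> mB" "1 < i" using Suc.prems rx2 by (auto simp: i_def)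
      obtain y' where y': "y' \<in> UU" "T y' = i" using occ_U[OF T i(1,2)] by blast
      have iB: "i \<in> T ` B" using y' UU_B by blast
      define L where "L = leftmost_col lam T i"
      obtain j0 where j0: "(j0, L) \<in> B" "T (j0, L) = i" using lm_in[OF iB] unfolding L_def by blast
      have "(j0, L) \<in> UU" using occ[OF j0(1)] j0(2) Suc.prems by (simp add: i_def)
      then have "(j0, L) = y'" using inj_onD[OF inj] y' j0(2) by blast
      then have Ly': "L = snd y'" by auto
      obtain j c where jc: "(j,c) \<in> B" "T (j,c) = i - 1" "L \<le> c"
        using QY_step[OF T i(3) iB] unfolding L_def by blast
      have "(j,c) \<in> UU" using occ[OF jc(1)] jc(2) Suc.prems by (simp add: i_def)
      moreover have "T (j,c) = T y" using jc(2) y(2) by (simp add: i_def)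
      ultimately have "(j,c) = y" using inj_onD[OF inj] y(1) by blast
      then have "snd y' \<le> snd x1" using Ly' jc(3) y(3) by auto
      then show ?case using y' by (auto simp: i_def)
    qed
  qed
  obtain y where y: "y \<in> UU" "T y = T x2 - 1" "snd y \<le> snd x1"
    using claim[of "T x2 - 1 - T x1"] v12 by auto
  have iB: "T x2 \<in> T ` B" using x2 UU_B by blast
  define L where "L = leftmost_col lam T (T x2)"
  obtain j c where jc: "(j,c) \<in> B" "T (j,c) = T x2 - 1" "L \<le> c"
    using QY_step[OF T _ iB] rx2 v12 unfolding L_def by auto
  have "(j,c) \<in> UU" using occ[OF jc(1)] jc(2) v12 by simp
  moreover have "T (j,c) = T y" using jc(2) y(2) by simp
  ultimately have "(j,c) = y" using inj_onD[OF inj] y(1) by blast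
  then have Lx1: "L \<le> snd x1" using jc(3) y(3) by auto
  obtain j0 where j0: "(j0, L) \<in> B" "T (j0, L) = T x2" using lm_in[OF iB] unfolding L_def by blast
  show False
  proof (cases "j0 = 0")
    case False
    then have "(j0, L) \<in> UU" using j0 by (simp add: UU_def)
    then have "(j0, L) = x2" using inj_onD[OF inj] x2 j0(2) by blast
    then show False using Lx1 c12 by auto
  next
    case True
    have b: "(0, snd x1) \<in> B" using x1 cc unfolding colclosed_def UU_def by (cases x1) auto
    have "T (0, L) \<le> T (0, snd x1)" using SSYT_row_mono[OF CB_S[OF T] b Lx1] .
    also have "\<dots> < T x1" using row0_lt[OF T x1] .
    finally show False using j0 True v12 by simp
  qed
qed

definition PT :: "(nat \<times> nat \<Rightarrow> nat) \<Rightarrow> nat \<times> nat \<Rightarrow> nat" where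
  "PT T x = card {c. c < l1 \<and> T (0,c) < T x}"

lemma PT_le: "PT T x \<le> l1"
proof -
  have "{c. c < l1 \<and> T (0,c) < T x} \<subseteq> {..<l1}" by blast
  then have "card {c. c < l1 \<and> T (0,c) < T x} \<le> card {..<l1}" by (rule card_mono[rotated]) simp
  then show ?thesis by (simp add: PT_def)
qed

lemma PT_mono: "T x \<le> T y \<Longrightarrow> PT T x \<le> PT T y"
proof -
  assume a: "T x \<le> T y"
  have "{c. c < l1 \<and> T (0,c) < T x} \<subseteq> {c. c < l1 \<and> T (0,c) < T y}" using a by auto
  then show ?thesis unfolding PT_def by (rule card_mono[rotated]) simp
qed

lemma PT_ge1:
  assumes T: "T \<in> QYT_eq mB lam" and x: "x \<in> UU"
  shows "1 \<le> PT T x"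
proof -
  have "T (0,0) < T x" using T00[OF T] UU_range[OF T x] by simp
  moreover have "0 < l1" using l12 l2 by simp
  ultimately have "0 \<in> {c. c < l1 \<and> T (0,c) < T x}" by blast
  then have "{c. c < l1 \<and> T (0,c) < T x} \<noteq> {}" by blast
  moreover have "finite {c. c < l1 \<and> T (0,c) < T x}" by simp
  ultimately show ?thesis unfolding PT_def by (simp add: Suc_leI card_gt_0_iff)
qed

lemma PT_strict:
  assumes T: "T \<in> QYT_eq mB lam" and x: "x \<in> UU" and y: "y \<in> UU"
    and c: "snd x < snd y" and v: "T x < T y"
  shows "PT T x < PT T y"
proof -
  obtain c0 where c0: "c0 < l1" "T x \<le> T (0,c0)" "T (0,c0) < T y" using lemX[OF T x y c v] by blast
  have sub: "{c. c < l1 \<and> T (0,c) < T x} \<subseteq> {c. c < l1 \<and> T (0,c) < T y}" using v by auto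
  have "c0 \<in> {c. c < l1 \<and> T (0,c) < T y}" "c0 \<notin> {c. c < l1 \<and> T (0,c) < T x}" using c0 by auto
  then have "{c. c < l1 \<and> T (0,c) < T x} \<subset> {c. c < l1 \<and> T (0,c) < T y}" using sub by blast
  then show ?thesis unfolding PT_def by (rule psubset_card_mono[rotated]) simp
qed

lemma T_row_lt:
  assumes T: "T \<in> QYT_eq mB lam" and x: "(j,c) \<in> UU" and y: "(j,c') \<in> UU" and c: "c < c'"
  shows "T (j,c) < T (j,c')"
proof -
  have "T (j,c) \<le> T (j,c')" using SSYT_row_mono[OF CB_S[OF T] UU_B[OF y]] c by simp
  moreover have "T (j,c) \<noteq> T (j,c')"
  proof
    assume "T (j,c) = T (j,c')"
    then have "(j,c) = (j,c')" using inj_onD[OF UU_inj[OF T]] x y by blast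
    then show False using c by simp
  qed
  ultimately show ?thesis by simp
qed

lemma PT_row:
  assumes T: "T \<in> QYT_eq mB lam" and x: "(j,c) \<in> UU" and y: "(j,c') \<in> UU" and c: "c < c'"
  shows "PT T (j,c) < PT T (j,c')"
proof -
  have "snd (j,c) < snd (j,c')" using c by simp
  then show ?thesis using PT_strict[OF T x y] T_row_lt[OF T x y c] by blast
qed

lemma PT_col:
  assumes T: "T \<in> QYT_eq mB lam" and y: "(j',c) \<in> UU" and j: "j \<le> j'"
  shows "PT T (j,c) \<le> PT T (j',c)"
  using PT_mono SSYT_col_mono[OF CB_S[OF T] cc UU_B[OF y] j] by blast

definition TB :: "(nat \<times> nat \<Rightarrow> nat) \<Rightarrow> nat list \<times> nat list \<times> nat list" where
  "TB T = (map (\<lambda>j. PT T (j,0)) [1..<h1], map (\<lambda>j. PT T (j,1)) [1..<h2], map (\<lambda>c. PT T (1,c)) [2..<l2])"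

lemma TB_in:
  assumes T: "T \<in> QYT_eq mB lam"
  shows "TB T \<in> Qs (h1 - 1) (h2 - 1) (l2 - 2) l1"
proof -
  have rng: "\<And>x. x \<in> UU \<Longrightarrow> 1 \<le> PT T x \<and> PT T x \<le> l1" using PT_ge1[OF T] PT_le by auto
  have u: "map (\<lambda>j. PT T (j,0)) [1..<h1] \<in> Wk (h1 - 1) l1"
    unfolding Wk_def
  proof (intro CollectI conjI)
    show "sorted (map (\<lambda>j. PT T (j,0)) [1..<h1])"
      unfolding sorted_iff_nth_mono using PT_col[OF T] UU_c0 by auto
    show "set (map (\<lambda>j. PT T (j,0)) [1..<h1]) \<subseteq> {1..l1}" using rng UU_c0 by auto
  qed simp
  have v: "map (\<lambda>j. PT T (j,1)) [1..<h2] \<in> Wk (h2 - 1) l1"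
    unfolding Wk_def
  proof (intro CollectI conjI)
    show "sorted (map (\<lambda>j. PT T (j,1)) [1..<h2])"
      unfolding sorted_iff_nth_mono using PT_col[OF T] UU_c1 by auto
    show "set (map (\<lambda>j. PT T (j,1)) [1..<h2]) \<subseteq> {1..l1}" using rng UU_c1 by auto
  qed simp
  have w: "map (\<lambda>c. PT T (1,c)) [2..<l2] \<in> SkA (l2 - 2) {1..l1}"
    unfolding SkA_def
  proof (intro CollectI conjI)
    show "sorted_wrt (<) (map (\<lambda>c. PT T (1,c)) [2..<l2])"
      unfolding sorted_wrt_iff_nth_less using PT_row[OF T] UU_r1 by auto
    show "set (map (\<lambda>c. PT T (1,c)) [2..<l2]) \<subseteq> {1..l1}" using rng UU_r1 by auto
  qed simp
  have hv: "hd (map (\<lambda>j. PT T (j,1)) [1..<h2]) = PT T (1,1)" using h2 by (simp add: hd_map upt_rec)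
  have hw: "\<forall>y\<in>set (map (\<lambda>c. PT T (1,c)) [2..<l2]). PT T (1,1) < y"
    using PT_row[OF T] UU_r1 l2 by auto
  have g: "good (map (\<lambda>j. PT T (j,0)) [1..<h1]) (map (\<lambda>j. PT T (j,1)) [1..<h2])"
    unfolding good_def using h12 PT_row[OF T, of _ 0 1] UU_c0 UU_c1 by auto
  show ?thesis using u v w hv hw g by (simp add: TB_def Qs_def Hs_def)
qed

end


context hk
begin

definition Pf :: "nat list \<times> nat list \<times> nat list \<Rightarrow> nat \<times> nat \<Rightarrow> nat" where
  "Pf t x = (if snd x = 0 then fst t ! (fst x - 1) else if snd x = 1 then fst (snd t) ! (fst x - 1)
     else snd (snd t) ! (snd x - 2))"

definition kle :: "(nat \<times> nat \<Rightarrow> nat) \<Rightarrow> nat \<times> nat \<Rightarrow> nat \<times> nat \<Rightarrow> bool" where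
  "kle P y x \<longleftrightarrow> P y < P x \<or> (P y = P x \<and> fst y \<le> fst x)"

lemma UU_cases:
  assumes "x \<in> UU"
  obtains j where "x = (j,0)" "1 \<le> j" "j < h1" | j where "x = (j,1)" "1 \<le> j" "j < h2"
    | c where "x = (1,c)" "2 \<le> c" "c < l2"
proof -
  obtain j c where x: "x = (j,c)" by (cases x)
  have "(j = 1 \<and> c < l2) \<or> (2 \<le> j \<and> j < h2 \<and> (c = 0 \<or> c = 1)) \<or> (h2 \<le> j \<and> j < h1 \<and> c = 0)"
    using assms unfolding x UU_eq by auto
  then consider "j = 1" "c < l2" | "2 \<le> j" "j < h2" "c = 0" | "2 \<le> j" "j < h2" "c = 1"
    | "h2 \<le> j" "j < h1" "c = 0" by blast
  then show thesis
  proof cases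
    case 1
    show thesis
    proof (cases "c = 0")
      case True then show thesis using that(1)[of j] 1 x h12 h2 by simp
    next
      case False
      show thesis
      proof (cases "c = 1")
        case True then show thesis using that(2)[of j] 1 x h12 h2 by simp
      next
        case False
        then show thesis using that(3)[of c] 1 x `c \<noteq> 0` by simp
      qed
    qed
  next
    case 2 then show thesis using that(1)[of j] x h12 by simp
  next
    case 3 then show thesis using that(2)[of j] x by simp
  next
    case 4 then show thesis using that(1)[of j] x h2 by simp
  qed
qed

definition Tv :: "nat list \<times> nat list \<times> nat list \<Rightarrow> nat \<times> nat \<Rightarrow> nat" where
  "Tv t x = 1 + card {y \<in> UU. kle (Pf t) y x}"

definition Rw :: "nat list \<times> nat list \<times> nat list \<Rightarrow> nat \<Rightarrow> nat" where
  "Rw t c = 1 + card {y \<in> UU. Pf t y \<le> c}"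

definition IB :: "nat list \<times> nat list \<times> nat list \<Rightarrow> nat \<times> nat \<Rightarrow> nat" where
  "IB t = (\<lambda>(j,c). if (j,c) \<notin> B then 0 else if j = 0 then Rw t c else Tv t (j,c))"

lemma kle_trans: "kle P z y \<Longrightarrow> kle P y x \<Longrightarrow> kle P z x" by (auto simp: kle_def)
lemma kle_total: "kle P x y \<or> kle P y x" by (auto simp: kle_def)
lemma kle_refl: "kle P x x" by (simp add: kle_def)

context
  fixes t :: "nat list \<times> nat list \<times> nat list"
  assumes tQ: "t \<in> Qs (h1 - 1) (h2 - 1) (l2 - 2) l1"
begin

definition "uu = fst t"
definition "vv = fst (snd t)"
definition "ww = snd (snd t)"

lemma t_props:
  "length uu = h1 - 1" "sorted uu" "set uu \<subseteq> {1..l1}"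
  "length vv = h2 - 1" "sorted vv" "set vv \<subseteq> {1..l1}"
  "length ww = l2 - 2" "sorted_wrt (<) ww" "set ww \<subseteq> {1..l1}" "\<forall>y\<in>set ww. hd vv < y"
  "good uu vv"
  using tQ by (auto simp: Qs_def Hs_def Wk_def SkA_def uu_def vv_def ww_def)

lemma Pf0: "Pf t (j,0) = uu ! (j - 1)" by (simp add: Pf_def uu_def)
lemma Pf1: "Pf t (j,1) = vv ! (j - 1)" by (simp add: Pf_def vv_def)
lemma Pf1': "Pf t (j,Suc 0) = vv ! (j - 1)" by (simp add: Pf_def vv_def)
lemma Pf2: "2 \<le> c \<Longrightarrow> Pf t (j,c) = ww ! (c - 2)" by (simp add: Pf_def ww_def)

lemma u_rng: "i < h1 - 1 \<Longrightarrow> 1 \<le> uu ! i \<and> uu ! i \<le> l1"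
proof -
  assume "i < h1 - 1"
  then have "uu ! i \<in> set uu" using t_props(1) by simp
  then show ?thesis using t_props(3) by auto
qed
lemma v_rng: "i < h2 - 1 \<Longrightarrow> 1 \<le> vv ! i \<and> vv ! i \<le> l1"
proof -
  assume "i < h2 - 1"
  then have "vv ! i \<in> set vv" using t_props(4) by simp
  then show ?thesis using t_props(6) by auto
qed
lemma w_rng: "i < l2 - 2 \<Longrightarrow> 1 \<le> ww ! i \<and> ww ! i \<le> l1"
proof -
  assume "i < l2 - 2"
  then have "ww ! i \<in> set ww" using t_props(7) by simp
  then show ?thesis using t_props(9) by auto
qed
lemma uv: "i < h2 - 1 \<Longrightarrow> uu ! i < vv ! i" using t_props(11) t_props(4) by (simp add: good_def)
lemma vw: "i < l2 - 2 \<Longrightarrow> vv ! 0 < ww ! i"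
proof -
  assume "i < l2 - 2"
  then have "ww ! i \<in> set ww" using t_props(7) by simp
  moreover have "hd vv = vv ! 0" using t_props(4) h2 by (cases vv) auto
  ultimately show ?thesis using t_props(10) by auto
qed
lemma ww_lt: "i < j \<Longrightarrow> j < l2 - 2 \<Longrightarrow> ww ! i < ww ! j"
  using sorted_wrt_nth_less[OF t_props(8), of i j] t_props(7) by simp
lemma uu_le: "i \<le> j \<Longrightarrow> j < h1 - 1 \<Longrightarrow> uu ! i \<le> uu ! j"
  using sorted_nth_mono[OF t_props(2), of i j] t_props(1) by simp
lemma vv_le: "i \<le> j \<Longrightarrow> j < h2 - 1 \<Longrightarrow> vv ! i \<le> vv ! j"
  using sorted_nth_mono[OF t_props(5), of i j] t_props(4) by simp

lemma G1: "x \<in> UU \<Longrightarrow> 1 \<le> Pf t x \<and> Pf t x \<le> l1"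
proof -
  assume x: "x \<in> UU"
  then show ?thesis
  proof (cases rule: UU_cases)
    case (1 j) then show ?thesis using u_rng[of "j - 1"] Pf0 by simp
  next
    case (2 j) then show ?thesis using v_rng[of "j - 1"] Pf1 by simp
  next
    case (3 c) then show ?thesis using w_rng[of "c - 2"] Pf2 by simp
  qed
qed

lemma row1_lt: "c < c' \<Longrightarrow> c' < l2 \<Longrightarrow> Pf t (1,c) < Pf t (1,c')"
proof -
  assume cc': "c < c'" "c' < l2"
  have a: "uu ! 0 < vv ! 0" using uv[of 0] h2 by simp
  show ?thesis
  proof (cases "c' = 1")
    case True
    then have "c = 0" using cc' by simp
    then show ?thesis using True a Pf0 Pf1' by simp
  next
    case False
    then have c'2: "2 \<le> c'" using cc' by simp
    then have Pc': "Pf t (1,c') = ww ! (c' - 2)" using Pf2 by simp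
    have b: "vv ! 0 < ww ! (c' - 2)" using vw cc' c'2 by simp
    consider "c = 0" | "c = 1" | "2 \<le> c" by linarith
    then show ?thesis
    proof cases
      case 1 then show ?thesis using a b Pc' Pf0 by simp
    next
      case 2 then show ?thesis using b Pc' Pf1' by simp
    next
      case 3 then show ?thesis using ww_lt[of "c - 2" "c' - 2"] Pc' Pf2 cc' by simp
    qed
  qed
qed

lemma G2:
  assumes x: "(j,c) \<in> UU" and y: "(j,c') \<in> UU" and c: "c < c'"
  shows "Pf t (j,c) < Pf t (j,c')"
proof (cases "j = 1")
  case True
  have "c' < l2" using y True UU_r1 by simp
  then show ?thesis using row1_lt[OF c] True by simp
next
  case False
  from y show ?thesis
  proof (cases rule: UU_cases)
    case (1 j') then show ?thesis using c by simp
  next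
    case (2 j')
    then have "c' = 1" "j = j'" by auto
    then have "c = 0" using c by simp
    have "uu ! (j - 1) < vv ! (j - 1)" using uv[of "j - 1"] 2 `j = j'` by simp
    then show ?thesis using `c = 0` `c' = 1` Pf0 Pf1 by simp
  next
    case (3 c'') then show ?thesis using False by simp
  qed
qed

lemma G3:
  assumes y: "(j',c) \<in> UU" and j: "1 \<le> j" "j \<le> j'"
  shows "Pf t (j,c) \<le> Pf t (j',c)"
  using y
proof (cases rule: UU_cases)
  case (1 j'') then show ?thesis using uu_le[of "j - 1" "j' - 1"] j Pf0 by simp
next
  case (2 j'') then show ?thesis using vv_le[of "j - 1" "j' - 1"] j Pf1 by simp
next
  case (3 c'') then show ?thesis using j by simp
qed

lemma G4: "x \<in> UU \<Longrightarrow> snd x + 1 \<le> Pf t x"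
proof -
  assume x: "x \<in> UU"
  have a: "uu ! 0 < vv ! 0" using uv[of 0] h2 by simp
  have a1: "1 \<le> uu ! 0" using u_rng[of 0] h12 h2 by simp
  from x show ?thesis
  proof (cases rule: UU_cases)
    case (1 j) then show ?thesis using u_rng[of "j - 1"] Pf0 by simp
  next
    case (2 j)
    have "vv ! 0 \<le> vv ! (j - 1)" using vv_le[of 0 "j - 1"] 2 by simp
    then show ?thesis using 2 a a1 Pf1 by simp
  next
    case (3 c)
    have "c - 2 < length ww" using t_props(7) 3 by simp
    then have "ww ! 0 + (c - 2) \<le> ww ! (c - 2)" by (rule sorted_strict_lb[OF t_props(8)])
    moreover have "vv ! 0 < ww ! 0" using vw[of 0] 3 by simp
    ultimately show ?thesis using 3 a a1 Pf2 by simp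
  qed
qed

lemma G5:
  assumes "x \<in> UU" "y \<in> UU" "Pf t x = Pf t y" "fst x = fst y"
  shows "x = y"
proof (rule ccontr)
  assume ne: "x \<noteq> y"
  obtain j c where x: "x = (j,c)" by (cases x)
  obtain c' where y: "y = (j,c')" using assms(4) x by (cases y) auto
  have "c \<noteq> c'" using ne x y by simp
  then show False
  proof (cases "c < c'")
    case True then show False using G2[of j c c'] assms x y by simp
  next
    case False then show False using G2[of j c' c] assms x y `c \<noteq> c'` by simp
  qed
qed

lemma kle_antisym: "x \<in> UU \<Longrightarrow> y \<in> UU \<Longrightarrow> kle (Pf t) x y \<Longrightarrow> kle (Pf t) y x \<Longrightarrow> x = y"
proof -
  assume a: "x \<in> UU" "y \<in> UU" "kle (Pf t) x y" "kle (Pf t) y x"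
  then have "Pf t x = Pf t y" "fst x = fst y" by (auto simp: kle_def)
  then show "x = y" using G5 a(1,2) by blast
qed

lemma Tv_mono: "x \<in> UU \<Longrightarrow> kle (Pf t) y x \<Longrightarrow> Tv t y \<le> Tv t x"
proof -
  assume x: "x \<in> UU" and k: "kle (Pf t) y x"
  have "{z \<in> UU. kle (Pf t) z y} \<subseteq> {z \<in> UU. kle (Pf t) z x}" using k kle_trans by blast
  then have "card {z \<in> UU. kle (Pf t) z y} \<le> card {z \<in> UU. kle (Pf t) z x}"
    by (rule card_mono[rotated]) (simp add: finite_UU)
  then show ?thesis by (simp add: Tv_def)
qed

lemma Tv_strict: "x \<in> UU \<Longrightarrow> y \<in> UU \<Longrightarrow> kle (Pf t) y x \<Longrightarrow> y \<noteq> x \<Longrightarrow> Tv t y < Tv t x"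
proof -
  assume x: "x \<in> UU" and y: "y \<in> UU" and k: "kle (Pf t) y x" and ne: "y \<noteq> x"
  have sub: "{z \<in> UU. kle (Pf t) z y} \<subseteq> {z \<in> UU. kle (Pf t) z x}" using k kle_trans by blast
  have "x \<in> {z \<in> UU. kle (Pf t) z x}" using x kle_refl by blast
  moreover have "x \<notin> {z \<in> UU. kle (Pf t) z y}" using kle_antisym[OF x y _ k] ne by blast
  ultimately have "{z \<in> UU. kle (Pf t) z y} \<subset> {z \<in> UU. kle (Pf t) z x}" using sub by blast
  then have "card {z \<in> UU. kle (Pf t) z y} < card {z \<in> UU. kle (Pf t) z x}"
    by (rule psubset_card_mono[rotated]) (simp add: finite_UU)
  then show ?thesis by (simp add: Tv_def)
qed

lemma Tv_iff: "x \<in> UU \<Longrightarrow> y \<in> UU \<Longrightarrow> Tv t y \<le> Tv t x \<longleftrightarrow> kle (Pf t) y x"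
proof
  assume x: "x \<in> UU" and y: "y \<in> UU" and le: "Tv t y \<le> Tv t x"
  show "kle (Pf t) y x"
  proof (rule ccontr)
    assume "\<not> kle (Pf t) y x"
    then have "kle (Pf t) x y" "x \<noteq> y" using kle_total kle_refl by metis+
    then have "Tv t x < Tv t y" using Tv_strict[OF y x] by simp
    then show False using le by simp
  qed
next
  assume x: "x \<in> UU" and y: "y \<in> UU" and k: "kle (Pf t) y x"
  show "Tv t y \<le> Tv t x" using Tv_mono[OF x k] .
qed

lemma Tv_rng: "x \<in> UU \<Longrightarrow> 2 \<le> Tv t x \<and> Tv t x \<le> mB"
proof -
  assume x: "x \<in> UU"
  have "x \<in> {z \<in> UU. kle (Pf t) z x}" using x kle_refl by blast
  moreover have "finite {z \<in> UU. kle (Pf t) z x}" using finite_UU by simp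
  ultimately have "0 < card {z \<in> UU. kle (Pf t) z x}" using card_gt_0_iff by blast
  then have "1 \<le> card {z \<in> UU. kle (Pf t) z x}" by simp
  moreover have "card {z \<in> UU. kle (Pf t) z x} \<le> card UU" by (rule card_mono[OF finite_UU]) blast
  ultimately show ?thesis using card_UU mB_ge by (simp add: Tv_def)
qed

lemma Tv_inj: "inj_on (Tv t) UU"
proof (rule inj_onI)
  fix x y assume x: "x \<in> UU" and y: "y \<in> UU" and e: "Tv t x = Tv t y"
  show "x = y"
  proof (rule ccontr)
    assume ne: "x \<noteq> y"
    from kle_total[of "Pf t" x y] show False
    proof
      assume "kle (Pf t) x y" then show False using Tv_strict[OF y x _ ne] e by simp
    next
      assume "kle (Pf t) y x" then show False using Tv_strict[OF x y] ne e by simp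
    qed
  qed
qed

lemma Tv_img: "Tv t ` UU = {2..mB}"
proof -
  have sub: "Tv t ` UU \<subseteq> {2..mB}" using Tv_rng by auto
  have "card (Tv t ` UU) = card UU" using card_image[OF Tv_inj] .
  also have "\<dots> = card {2..mB}" using card_UU mB_ge by simp
  finally show ?thesis using sub by (intro card_subset_eq) auto
qed

end

end


context hk
begin

context
  fixes t :: "nat list \<times> nat list \<times> nat list"
  assumes tQ: "t \<in> Qs (h1 - 1) (h2 - 1) (l2 - 2) l1"
begin

lemma IB_out: "(j,c) \<notin> B \<Longrightarrow> IB t (j,c) = 0" by (simp add: IB_def)
lemma IB_0: "c < l1 \<Longrightarrow> IB t (0,c) = Rw t c" using B0 by (simp add: IB_def)
lemma IB_U: "x \<in> UU \<Longrightarrow> IB t x = Tv t x"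
  by (cases x) (auto simp: IB_def UU_def)

lemma Rw_mono: "c \<le> c' \<Longrightarrow> Rw t c \<le> Rw t c'"
proof -
  assume a: "c \<le> c'"
  have "{y \<in> UU. Pf t y \<le> c} \<subseteq> {y \<in> UU. Pf t y \<le> c'}" using a by auto
  then have "card {y \<in> UU. Pf t y \<le> c} \<le> card {y \<in> UU. Pf t y \<le> c'}"
    by (rule card_mono[rotated]) (simp add: finite_UU)
  then show ?thesis by (simp add: Rw_def)
qed

lemma Rw_le: "Rw t c \<le> mB"
proof -
  have "card {y \<in> UU. Pf t y \<le> c} \<le> card UU" by (rule card_mono[OF finite_UU]) blast
  then show ?thesis using card_UU mB_ge by (simp add: Rw_def)
qed

lemma Rw_lt_Tv: "x \<in> UU \<Longrightarrow> c < Pf t x \<Longrightarrow> Rw t c < Tv t x"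
proof -
  assume x: "x \<in> UU" and c: "c < Pf t x"
  have sub: "{y \<in> UU. Pf t y \<le> c} \<subseteq> {y \<in> UU. kle (Pf t) y x}" using c by (auto simp: kle_def)
  have "x \<in> {y \<in> UU. kle (Pf t) y x}" "x \<notin> {y \<in> UU. Pf t y \<le> c}" using x c kle_refl by auto
  then have "{y \<in> UU. Pf t y \<le> c} \<subset> {y \<in> UU. kle (Pf t) y x}" using sub by blast
  then have "card {y \<in> UU. Pf t y \<le> c} < card {y \<in> UU. kle (Pf t) y x}"
    by (rule psubset_card_mono[rotated]) (simp add: finite_UU)
  then show ?thesis by (simp add: Rw_def Tv_def)
qed

lemma Tv_le_Rw: "x \<in> UU \<Longrightarrow> Pf t x \<le> c \<Longrightarrow> Tv t x \<le> Rw t c"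
proof -
  assume x: "x \<in> UU" and c: "Pf t x \<le> c"
  have sub: "{y \<in> UU. kle (Pf t) y x} \<subseteq> {y \<in> UU. Pf t y \<le> c}" using c by (auto simp: kle_def)
  then have "card {y \<in> UU. kle (Pf t) y x} \<le> card {y \<in> UU. Pf t y \<le> c}"
    by (rule card_mono[rotated]) (simp add: finite_UU)
  then show ?thesis by (simp add: Rw_def Tv_def)
qed

lemma UUi: "(j,c) \<in> B \<Longrightarrow> 1 \<le> j \<Longrightarrow> (j,c) \<in> UU" by (simp add: UU_def)

lemma IB_SSYT: "is_SSYT lam (IB t)"
  unfolding is_SSYT_def
proof (intro conjI allI impI ballI)
  fix b assume "b \<notin> B" then show "IB t b = 0" using IB_out by (cases b) auto
next
  fix b assume b: "b \<in> B"
  obtain j c where jc: "b = (j,c)" by (cases b)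
  show "1 \<le> IB t b"
  proof (cases "j = 0")
    case True
    then have "c < l1" using b jc B0 by simp
    then show ?thesis using IB_0 True jc by (simp add: Rw_def)
  next
    case False
    then have "b \<in> UU" using b jc UUi by simp
    then show ?thesis using IB_U Tv_rng[OF tQ] by fastforce
  qed
next
  fix j c assume a: "(j,c) \<in> B \<and> (j, Suc c) \<in> B"
  show "IB t (j,c) \<le> IB t (j, Suc c)"
  proof (cases "j = 0")
    case True
    then show ?thesis using a B0 IB_0 Rw_mono by simp
  next
    case False
    then have u: "(j,c) \<in> UU" "(j, Suc c) \<in> UU" using a UUi by auto
    have "Pf t (j,c) < Pf t (j, Suc c)" using G2[OF tQ u] by simp
    then have "kle (Pf t) (j,c) (j, Suc c)" by (simp add: kle_def)
    then show ?thesis using Tv_mono[OF tQ u(2)] IB_U u by simp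
  qed
next
  fix j c assume a: "(j,c) \<in> B \<and> (Suc j, c) \<in> B"
  show "IB t (j,c) < IB t (Suc j, c)"
  proof (cases "j = 0")
    case True
    have u: "(1,c) \<in> UU" using a True UUi by simp
    have c: "c < l1" using a True B0 by simp
    have "c < Pf t (1,c)" using G4[OF tQ u] by simp
    then show ?thesis using Rw_lt_Tv[OF u] IB_0[OF c] IB_U[OF u] True by simp
  next
    case False
    then have u: "(j,c) \<in> UU" "(Suc j, c) \<in> UU" using a UUi by auto
    have "Pf t (j,c) \<le> Pf t (Suc j, c)" using G3[OF tQ u(2)] False by simp
    then have "kle (Pf t) (j,c) (Suc j, c)" by (auto simp: kle_def)
    then show ?thesis using Tv_strict[OF tQ u(2) u(1)] IB_U u by simp
  qed
qed

lemma IB_rng: "b \<in> B \<Longrightarrow> IB t b \<le> mB"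
proof -
  assume b: "b \<in> B"
  obtain j c where jc: "b = (j,c)" by (cases b)
  show ?thesis
  proof (cases "j = 0")
    case True
    then show ?thesis using b jc B0 IB_0 Rw_le by simp
  next
    case False
    then have "b \<in> UU" using b jc UUi by simp
    then show ?thesis using IB_U Tv_rng[OF tQ] by fastforce
  qed
qed

lemma IB_Max: "Max (IB t ` B) = mB"
proof (rule Max_eqI)
  show "finite (IB t ` B)" using finite_boxes by simp
  show "\<And>y. y \<in> IB t ` B \<Longrightarrow> y \<le> mB" using IB_rng by blast
  have "mB \<in> Tv t ` UU" using Tv_img[OF tQ] mB_ge by simp
  then obtain x where "x \<in> UU" "Tv t x = mB" by (metis imageE)
  then show "mB \<in> IB t ` B" using IB_U UU_B by (metis image_eqI)
qed

lemma IB_QY: "quasi_yamanouchi lam (IB t)"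
  unfolding quasi_yamanouchi_def
proof (intro allI impI)
  fix i assume i: "1 < i \<and> i \<in> IB t ` B"
  then obtain b where b: "b \<in> B" "IB t b = i" by blast
  have imB: "i \<le> mB" using IB_rng b by blast
  have "i \<in> Tv t ` UU" using Tv_img[OF tQ] imB i by simp
  then obtain x where x: "x \<in> UU" "Tv t x = i" by (metis imageE)
  obtain jx cx where xjc: "x = (jx,cx)" by (cases x)
  define p where "p = Pf t x"
  define L where "L = leftmost_col lam (IB t) i"
  have Lx: "L \<le> snd x" using lm_le[of jx cx "IB t" i] x UU_B IB_U xjc unfolding L_def by simp
  have p1: "1 \<le> p" "p \<le> l1" using G1[OF tQ x(1)] by (auto simp: p_def)
  have px: "snd x + 1 \<le> p" using G4[OF tQ x(1)] by (simp add: p_def)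
  show "\<exists>j c. (j, c) \<in> B \<and> IB t (j, c) = i - 1 \<and> L \<le> c"
  proof (cases "\<forall>y\<in>UU. kle (Pf t) y x \<and> y \<noteq> x \<longrightarrow> Pf t y < p")
    case True
    have eq: "{y \<in> UU. Pf t y \<le> p - 1} = {y \<in> UU. kle (Pf t) y x} - {x}"
    proof
      show "{y \<in> UU. Pf t y \<le> p - 1} \<subseteq> {y \<in> UU. kle (Pf t) y x} - {x}"
        using p1 by (auto simp: kle_def p_def)
      show "{y \<in> UU. kle (Pf t) y x} - {x} \<subseteq> {y \<in> UU. Pf t y \<le> p - 1}"
        using True by auto
    qed
    have xin: "x \<in> {y \<in> UU. kle (Pf t) y x}" using x kle_refl by blast
    have "card ({y \<in> UU. kle (Pf t) y x} - {x}) = card {y \<in> UU. kle (Pf t) y x} - 1"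
      using xin finite_UU by (simp add: card_Diff_singleton)
    moreover have "0 < card {y \<in> UU. kle (Pf t) y x}"
    proof -
      have "finite {y \<in> UU. kle (Pf t) y x}" using finite_UU by simp
      then show ?thesis using xin card_gt_0_iff by blast
    qed
    ultimately have "Rw t (p - 1) = Tv t x - 1"
      unfolding Rw_def Tv_def eq by simp
    moreover have "p - 1 < l1" using p1 by simp
    ultimately have "IB t (0, p - 1) = i - 1" using IB_0 x by simp
    moreover have "(0, p - 1) \<in> B" using B0 p1 by simp
    moreover have "L \<le> p - 1" using Lx px by simp
    ultimately show ?thesis by blast
  next
    case False
    then obtain y where y: "y \<in> UU" "kle (Pf t) y x" "y \<noteq> x" "\<not> Pf t y < p" by blast
    have ty: "Tv t y < i" using Tv_strict[OF tQ x(1) y(1) y(2) y(3)] x by simp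
    have ty2: "2 \<le> Tv t y" using Tv_rng[OF tQ y(1)] by simp
    have "i - 1 \<in> Tv t ` UU" using Tv_img[OF tQ] ty ty2 imB by (simp add: le_diff_conv2)
    then obtain x' where x': "x' \<in> UU" "Tv t x' = i - 1" by (metis imageE)
    have k1: "kle (Pf t) x' x" using Tv_iff[OF tQ x(1) x'(1)] x x' by simp
    have ne: "x' \<noteq> x" using x x' i by auto
    have k2: "kle (Pf t) y x'" using Tv_iff[OF tQ x'(1) y(1)] x' ty by linarith
    have Pe: "Pf t x' = p" using k1 k2 y(4) by (auto simp: kle_def p_def)
    have f1: "fst x' \<le> fst x" using k1 Pe by (auto simp: kle_def p_def)
    have f2: "fst x' \<noteq> fst x" using G5[OF tQ x'(1) x(1)] Pe ne by (auto simp: p_def)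
    have cx': "snd x \<le> snd x'"
    proof (rule ccontr)
      assume "\<not> snd x \<le> snd x'"
      then have lt: "snd x' < snd x" by simp
      define z where "z = (fst x', snd x)"
      have xB: "(fst x, snd x) \<in> B" using UU_B[OF x(1)] by simp
      have "z \<in> B" using cc xB f1 unfolding colclosed_def z_def by blast
      moreover have "1 \<le> fst x'" using UU_fst[OF x'(1)] .
      ultimately have zU: "z \<in> UU" by (simp add: UU_def z_def)
      have x'U: "(fst x', snd x') \<in> UU" using x'(1) by simp
      have "Pf t (fst x', snd x') < Pf t z" using G2[OF tQ x'U] zU lt unfolding z_def by simp
      moreover have xU: "(fst x, snd x) \<in> UU" using x(1) by simp
      have "Pf t z \<le> Pf t (fst x, snd x)" using G3[OF tQ xU] `1 \<le> fst x'` f1 unfolding z_def by simp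
      ultimately show False using Pe by (simp add: p_def)
    qed
    have "IB t x' = i - 1" using IB_U[OF x'(1)] x' by simp
    moreover have "L \<le> snd x'" using Lx cx' by simp
    ultimately show ?thesis using UU_B[OF x'(1)] by (metis prod.collapse)
  qed
qed

lemma IB_in: "IB t \<in> QYT_eq mB lam"
  using IB_SSYT IB_QY IB_Max by (simp add: QYT_eq_def)

lemma PT_IB: "x \<in> UU \<Longrightarrow> PT (IB t) x = Pf t x"
proof -
  assume x: "x \<in> UU"
  have "{c. c < l1 \<and> IB t (0,c) < IB t x} = {..<Pf t x}"
  proof (rule set_eqI)
    fix c
    show "c \<in> {c. c < l1 \<and> IB t (0,c) < IB t x} \<longleftrightarrow> c \<in> {..<Pf t x}"
    proof
      assume "c \<in> {c. c < l1 \<and> IB t (0,c) < IB t x}"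
      then have c: "c < l1" "Rw t c < Tv t x" using IB_0 IB_U[OF x] by auto
      show "c \<in> {..<Pf t x}"
      proof (rule ccontr)
        assume "c \<notin> {..<Pf t x}"
        then have "Pf t x \<le> c" by simp
        then have "Tv t x \<le> Rw t c" by (rule Tv_le_Rw[OF x])
        then show False using c by simp
      qed
    next
      assume "c \<in> {..<Pf t x}"
      then have c: "c < Pf t x" by simp
      then have "c < l1" using G1[OF tQ x] by simp
      then show "c \<in> {c. c < l1 \<and> IB t (0,c) < IB t x}"
        using Rw_lt_Tv[OF x c] IB_0 IB_U[OF x] by simp
    qed
  qed
  then show ?thesis by (simp add: PT_def)
qed

lemma TB_IB: "TB (IB t) = t"
proof -
  obtain u v w where t: "t = (u,v,w)" by (cases t) auto
  have len: "length u = h1 - 1" "length v = h2 - 1" "length w = l2 - 2"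
    using tQ t by (auto simp: Qs_def Hs_def Wk_def SkA_def)
  have 1: "map (\<lambda>j. PT (IB t) (j,0)) [1..<h1] = u"
  proof (rule nth_equalityI)
    show "length (map (\<lambda>j. PT (IB t) (j,0)) [1..<h1]) = length u" using len by simp
    fix i assume "i < length (map (\<lambda>j. PT (IB t) (j,0)) [1..<h1])"
    then have i: "Suc i < h1" by simp
    then have "(Suc i, 0) \<in> UU" using UU_c0 by simp
    then show "map (\<lambda>j. PT (IB t) (j,0)) [1..<h1] ! i = u ! i"
      using PT_IB i by (simp add: Pf_def t)
  qed
  have 2: "map (\<lambda>j. PT (IB t) (j,1)) [1..<h2] = v"
  proof (rule nth_equalityI)
    show "length (map (\<lambda>j. PT (IB t) (j,1)) [1..<h2]) = length v" using len by simp
    fix i assume "i < length (map (\<lambda>j. PT (IB t) (j,1)) [1..<h2])"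
    then have i: "Suc i < h2" by simp
    then have "(Suc i, 1) \<in> UU" using UU_c1 by simp
    then show "map (\<lambda>j. PT (IB t) (j,1)) [1..<h2] ! i = v ! i"
      using PT_IB i by (simp add: Pf_def t)
  qed
  have 3: "map (\<lambda>c. PT (IB t) (1,c)) [2..<l2] = w"
  proof (rule nth_equalityI)
    show "length (map (\<lambda>c. PT (IB t) (1,c)) [2..<l2]) = length w" using len by simp
    fix i assume "i < length (map (\<lambda>c. PT (IB t) (1,c)) [2..<l2])"
    then have i: "Suc (Suc i) < l2" by simp
    then have "(1, Suc (Suc i)) \<in> UU" using UU_r1 by simp
    then show "map (\<lambda>c. PT (IB t) (1,c)) [2..<l2] ! i = w ! i"
      using PT_IB i by (simp add: Pf_def t)
  qed
  show ?thesis using 1 2 3 by (simp add: TB_def t)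
qed

end

lemma Pf_TB:
  assumes x: "x \<in> UU"
  shows "Pf (TB T) x = PT T x"
  using x
proof (cases rule: UU_cases)
  case (1 j)
  then have "[Suc 0..<h1] ! (j - 1) = j" by simp
  then show ?thesis using 1 by (simp add: Pf_def TB_def)
next
  case (2 j)
  then have "[Suc 0..<h2] ! (j - 1) = j" by simp
  then show ?thesis using 2 by (simp add: Pf_def TB_def)
next
  case (3 c)
  then have "[2..<l2] ! (c - 2) = c" by simp
  then show ?thesis using 3 by (simp add: Pf_def TB_def)
qed

lemma card_le_val:
  assumes T: "T \<in> QYT_eq mB lam" and s: "1 \<le> s" "s \<le> mB"
  shows "card {x \<in> UU. T x \<le> s} = s - 1"
proof -
  have "T ` {x \<in> UU. T x \<le> s} = {2..s}"
  proof
    show "T ` {x \<in> UU. T x \<le> s} \<subseteq> {2..s}" using UU_range[OF T] by auto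
    show "{2..s} \<subseteq> T ` {x \<in> UU. T x \<le> s}"
    proof
      fix r assume r: "r \<in> {2..s}"
      then have "r \<in> T ` UU" using UU_img[OF T] s by auto
      then obtain x where "x \<in> UU" "T x = r" by (metis imageE)
      then show "r \<in> T ` {x \<in> UU. T x \<le> s}" using r by auto
    qed
  qed
  moreover have "inj_on T {x \<in> UU. T x \<le> s}" using UU_inj[OF T] by (rule inj_on_subset) auto
  ultimately have "card {x \<in> UU. T x \<le> s} = card {2..s}" by (metis card_image)
  then show ?thesis by simp
qed

lemma PT_le_iff:
  assumes T: "T \<in> QYT_eq mB lam" and c: "c < l1" and x: "x \<in> UU"
  shows "PT T x \<le> c \<longleftrightarrow> T x \<le> T (0,c)"
proof
  assume a: "PT T x \<le> c"
  show "T x \<le> T (0,c)"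
  proof (rule ccontr)
    assume "\<not> T x \<le> T (0,c)"
    then have lt: "T (0,c) < T x" by simp
    have "{..c} \<subseteq> {c'. c' < l1 \<and> T (0,c') < T x}"
    proof
      fix c' assume "c' \<in> {..c}"
      then have "c' \<le> c" by simp
      then have "T (0,c') \<le> T (0,c)" using SSYT_row_mono[OF CB_S[OF T]] B0 c by simp
      then show "c' \<in> {c'. c' < l1 \<and> T (0,c') < T x}" using lt c `c' \<le> c` by simp
    qed
    then have "card {..c} \<le> card {c'. c' < l1 \<and> T (0,c') < T x}" by (rule card_mono[rotated]) simp
    then show False using a by (simp add: PT_def)
  qed
next
  assume a: "T x \<le> T (0,c)"
  have "{c'. c' < l1 \<and> T (0,c') < T x} \<subseteq> {..<c}"
  proof
    fix c' assume c': "c' \<in> {c'. c' < l1 \<and> T (0,c') < T x}"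
    show "c' \<in> {..<c}"
    proof (rule ccontr)
      assume "c' \<notin> {..<c}"
      then have "c \<le> c'" by simp
      then have "T (0,c) \<le> T (0,c')" using SSYT_row_mono[OF CB_S[OF T]] B0 c' by simp
      then show False using a c' by simp
    qed
  qed
  then have "card {c'. c' < l1 \<and> T (0,c') < T x} \<le> card {..<c}" by (rule card_mono[rotated]) simp
  then show "PT T x \<le> c" by (simp add: PT_def)
qed

lemma order_fwd:
  assumes T: "T \<in> QYT_eq mB lam" and x: "x \<in> UU" and y: "y \<in> UU" and le: "T y \<le> T x"
  shows "kle (PT T) y x"
proof (cases "y = x")
  case True then show ?thesis by (simp add: kle_refl)
next
  case False
  then have lt: "T y < T x" using le inj_onD[OF UU_inj[OF T] _ y x] by fastforce
  have pm: "PT T y \<le> PT T x" using PT_mono le by blast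
  show ?thesis
  proof (cases "PT T y < PT T x")
    case True then show ?thesis by (simp add: kle_def)
  next
    case False
    then have pe: "PT T y = PT T x" using pm by simp
    have "fst y \<le> fst x"
    proof (rule ccontr)
      assume "\<not> fst y \<le> fst x"
      then have fxy: "fst x < fst y" by simp
      consider "snd y = snd x" | "snd y < snd x" | "snd x < snd y" by linarith
      then show False
      proof cases
        case 1
        have yB: "(fst y, snd y) \<in> B" using UU_B[OF y] by simp
        have "T (fst x, snd y) < T (fst y, snd y)"
          using SSYT_col_strict[OF CB_S[OF T] cc yB fxy] .
        moreover have "(fst x, snd y) = x" using 1 by simp
        moreover have "(fst y, snd y) = y" by simp
        ultimately show False using lt by simp
      next
        case 2
        then show False using PT_strict[OF T y x 2 lt] pe by simp
      next
        case 3
        define z where "z = (fst x, snd y)"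
        have yB: "(fst y, snd y) \<in> B" using UU_B[OF y] by simp
        have zB: "z \<in> B" using cc yB fxy unfolding colclosed_def z_def by (meson less_imp_le)
        have "T (fst x, snd x) \<le> T z" using SSYT_row_mono[OF CB_S[OF T] zB[unfolded z_def], of "snd x"] 3 unfolding z_def by simp
        moreover have "T z < T (fst y, snd y)" using SSYT_col_strict[OF CB_S[OF T] cc yB fxy] by (simp add: z_def)
        ultimately show False using lt by simp
      qed
    qed
    then show ?thesis using pe by (simp add: kle_def)
  qed
qed

lemma order_agree:
  assumes T: "T \<in> QYT_eq mB lam" and x: "x \<in> UU" and y: "y \<in> UU"
  shows "T y \<le> T x \<longleftrightarrow> kle (PT T) y x"
proof
  assume "T y \<le> T x" then show "kle (PT T) y x" using order_fwd[OF T x y] by blast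
next
  assume k: "kle (PT T) y x"
  show "T y \<le> T x"
  proof (rule ccontr)
    assume "\<not> T y \<le> T x"
    then have lt: "T x < T y" by simp
    then have k2: "kle (PT T) x y" using order_fwd[OF T y x] by simp
    have pe: "PT T x = PT T y" "fst x = fst y" using k k2 by (auto simp: kle_def)
    obtain j cx where xx: "x = (j,cx)" by (cases x)
    obtain cy where yy: "y = (j,cy)" using pe(2) xx by (cases y) auto
    have "cx < cy"
    proof (rule ccontr)
      assume "\<not> cx < cy"
      then have "cy \<le> cx" by simp
      then have "T y \<le> T x" using SSYT_row_mono[OF CB_S[OF T]] UU_B[OF x] xx yy by simp
      then show False using lt by simp
    qed
    then show False using PT_row[OF T, of j cx cy] x y xx yy pe by simp
  qed
qed

lemma IB_TB:
  assumes T: "T \<in> QYT_eq mB lam"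
  shows "IB (TB T) = T"
proof (rule ext)
  fix b :: "nat \<times> nat"
  obtain j c where b: "b = (j,c)" by (cases b)
  have tQ: "TB T \<in> Qs (h1 - 1) (h2 - 1) (l2 - 2) l1" using TB_in[OF T] .
  show "IB (TB T) b = T b"
  proof (cases "(j,c) \<in> B")
    case False
    then show ?thesis using CB_S[OF T] b IB_out[OF tQ] by (auto simp: is_SSYT_def)
  next
    case True
    show ?thesis
    proof (cases "j = 0")
      case j0: True
      then have c: "c < l1" using True B0 by simp
      have r: "1 \<le> T (0,c)" "T (0,c) \<le> mB" using QYT_range[OF T] True j0 by auto
      have "{y \<in> UU. Pf (TB T) y \<le> c} = {y \<in> UU. T y \<le> T (0,c)}"
        using Pf_TB PT_le_iff[OF T c] by auto
      then have "Rw (TB T) c = T (0,c)" unfolding Rw_def using card_le_val[OF T r] r by simp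
      then show ?thesis using IB_0[OF tQ c] b j0 by simp
    next
      case False
      then have x: "(j,c) \<in> UU" using True by (simp add: UU_def)
      have "{y \<in> UU. kle (Pf (TB T)) y (j,c)} = {y \<in> UU. T y \<le> T (j,c)}"
        using Pf_TB[OF x] Pf_TB order_agree[OF T x] by (auto simp: kle_def)
      moreover have "2 \<le> T (j,c)" "T (j,c) \<le> mB" using UU_range[OF T x] by auto
      ultimately have "Tv (TB T) (j,c) = T (j,c)" unfolding Tv_def using card_le_val[OF T] by simp
      then show ?thesis using IB_U[OF tQ x] b by simp
    qed
  qed
qed

lemma card_caseB: "card (QYT_eq mB lam) = card (Qs (h1 - 1) (h2 - 1) (l2 - 2) l1)"
proof (rule bij_betw_same_card[of TB])
  show "bij_betw TB (QYT_eq mB lam) (Qs (h1 - 1) (h2 - 1) (l2 - 2) l1)"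
    by (rule bij_betw_byWitness[where f' = IB]) (use IB_TB TB_IB TB_in IB_in in auto)
qed

end


theorem lemma4p3:
  fixes l1 l2 h1 h2 n m :: nat
  assumes "l1 \<ge> l2" and "l2 \<ge> 2" and "h1 \<ge> h2" and "h2 \<ge> 2"
    and "n = l1 + l2 + h1 + h2 - 4"
    and "m = h1 \<or> m = n - (l1 - 1)"
  shows "real (card (QYT_eq m (hook_shape l1 l2 h1 h2))) =
    (real (l1 - l2 + 1) / real (m - h2 + 1))
    * real ((l1 + h1 - 2) choose (m - h2))
    * real ((l2 + h1 - 3) choose (m - h2))
    * real ((m - h2) choose (m - h1))
    * real ((l2 + h2 - 4) choose (h2 - 2))
    * real ((l1 + h2 - 3) choose (h2 - 2))
    * (1 / real ((h1 - 1) choose (h2 - 2)))"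
proof -
  interpret hk l1 l2 h1 h2 using assms(1-4) by unfold_locales
  show ?thesis
  proof (cases "m = h1")
    case True
    define a where "a = l1 - 1"
    define b where "b = l2 - 2"
    define k where "k = h2 - 2"
    define d where "d = h1 - h2"
    have ba: "b < a" using assms(1,2) by (simp add: a_def b_def)
    have e0: "l1 = a + 1" "l2 = b + 2" "h2 = k + 2" "h1 = k + d + 2" "m = k + d + 2"
      using assms(1-4) True by (simp_all add: a_def b_def k_def d_def)
    have "real (card (QYT_eq m (hook_shape l1 l2 h1 h2))) = real (card (Qs a (Suc b) k (k + d + 2)))"
    proof -
      have "l2 - 1 = Suc b" using assms(2) by (simp add: b_def)
      then show ?thesis using card_caseA True by (simp add: a_def k_def e0(4))
    qed
    also have "\<dots> = Gq a b k (k + d + 2)" by (rule card_Qs_real) (use ba in simp_all)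
    also have "\<dots> = (real (a - b) / real (d + 1)) * real ((a+k+d+1) choose d) * real ((b+k+d+1) choose d)
      * real (d choose 0) * real ((b+k) choose k) * real ((a+k) choose k) * (1 / real ((k+d+1) choose k))"
      by (rule formA[OF ba, symmetric])
    also have "\<dots> = (real (l1 - l2 + 1) / real (m - h2 + 1))
      * real ((l1 + h1 - 2) choose (m - h2))
      * real ((l2 + h1 - 3) choose (m - h2))
      * real ((m - h2) choose (m - h1))
      * real ((l2 + h2 - 4) choose (h2 - 2))
      * real ((l1 + h2 - 3) choose (h2 - 2))
      * (1 / real ((h1 - 1) choose (h2 - 2)))"
    proof -
      have f: "l1 - l2 + 1 = a - b" "m - h2 + 1 = d + 1" "l1 + h1 - 2 = a + k + d + 1" "m - h2 = d"
        "l2 + h1 - 3 = b + k + d + 1" "m - h1 = 0" "l2 + h2 - 4 = b + k" "h2 - 2 = k"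
        "l1 + h2 - 3 = a + k" "h1 - 1 = k + d + 1"
        using e0 ba by simp_all
      show ?thesis unfolding f by (rule refl)
    qed
    finally show ?thesis .
  next
    case False
    then have mn: "m = n - (l1 - 1)" using assms(6) by simp
    define a where "a = h1 - 1"
    define b where "b = h2 - 2"
    define k where "k = l2 - 2"
    define d where "d = l1 - l2"
    have ba: "b < a" using assms(3,4) by (simp add: a_def b_def)
    have e0: "h1 = a + 1" "h2 = b + 2" "l2 = k + 2" "l1 = k + d + 2" "m = a + b + k + 2"
      using assms(1-5) mn by (simp_all add: a_def b_def k_def d_def)
    have "mB = l2 + h1 + h2 - 3" by (rule mB_def)
    then have mB: "m = mB" using e0 by simp
    have "real (card (QYT_eq m (hook_shape l1 l2 h1 h2))) = real (card (Qs a (Suc b) k (k + d + 2)))"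
    proof -
      have "h2 - 1 = Suc b" using assms(4) by (simp add: b_def)
      then show ?thesis using card_caseB mB by (simp add: a_def k_def e0(4))
    qed
    also have "\<dots> = Gq a b k (k + d + 2)" by (rule card_Qs_real) (use ba in simp_all)
    also have "\<dots> = (real (d + 1) / real (a + k + 1)) * real ((k+d+a+1) choose (a+k)) * real ((k+a) choose (a+k))
      * real ((a+k) choose (b+k+1)) * real ((k+b) choose b) * real ((k+d+b+1) choose b) * (1 / real (a choose b))"
      by (rule formB[OF ba, symmetric])
    also have "\<dots> = (real (l1 - l2 + 1) / real (m - h2 + 1))
      * real ((l1 + h1 - 2) choose (m - h2))
      * real ((l2 + h1 - 3) choose (m - h2))
      * real ((m - h2) choose (m - h1))
      * real ((l2 + h2 - 4) choose (h2 - 2))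
      * real ((l1 + h2 - 3) choose (h2 - 2))
      * (1 / real ((h1 - 1) choose (h2 - 2)))"
    proof -
      have f: "l1 - l2 + 1 = d + 1" "m - h2 + 1 = a + k + 1" "l1 + h1 - 2 = k + d + a + 1" "m - h2 = a + k"
        "l2 + h1 - 3 = k + a" "m - h1 = b + k + 1" "l2 + h2 - 4 = k + b" "h2 - 2 = b"
        "l1 + h2 - 3 = k + d + b + 1" "h1 - 1 = a"
        using e0 by simp_all
      show ?thesis unfolding f by (rule refl)
    qed
    finally show ?thesis .
  qed
qed


end
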